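(* Let $A>0$, $\alpha>0$ and let $k\ge3$ be an integer such that \[ \frac{4A^{1/2}k^{1/2}\alpha}{\pi^2}+\frac{2A^{1/4}k^{1/4}\alpha^{1/2}}{\pi}\big(k^{1/2}+k^{-1/2}\big)+1\le k. \] Then for every $a$ with $1\le a\le k^{1/2}$, \[ \lambda_k(R^A_a,\alpha)\ge\lambda_k(S_k,\alpha). \]
   Context: For a bounded open set $\Omega\subset\mathbb{R}^2$ with Lipschitz boundary (possibly disconnected) and $\alpha>0$, $\lambda_1(\Omega,\alpha)\le\lambda_2(\Omega,\alpha)\le\cdots$ denote the eigenvalues, counted with multiplicity, of the Robin Laplacian $-\Delta u=\lambda u$, $\partial_\nu u+\alpha u=0$ on $\partial\Omega$ (defined via the form $\int_\Omega\nabla u\cdot\overline{\nabla v}+\alpha\int_{\partial\Omega}u\overline v$ on $H^1(\Omega)$). $R^A_a$ is a rectangle with side lengths $A^{1/2}a$ and $A^{1/2}/a$; $S_k$ is the disjoint union of $k$ equal squares of total area $A$. *)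

theory Defs
  imports "HOL-Analysis.Analysis"
begin

text \<open>Domains considered: a disjoint union of m copies of the closed rectangle
  [0,L1] x [0,L2] in the plane.  A function on the domain is represented as
  u :: nat => real*real => real, where u i is the function on the i-th copy (i < m).
  Trial functions are restrictions of C^1 functions on the whole plane, which are
  dense in H^1 of a Lipschitz domain (with continuous trace), so the min-max values
  below are the Robin eigenvalues defined through the H^1 form.\<close>

definition C1fun :: "(real \<times> real \<Rightarrow> real) \<Rightarrow> bool" where
  "C1fun f \<longleftrightarrow> (\<exists>D. continuous_on UNIV D \<and> (\<forall>x. (f has_derivative blinfun_apply (D x)) (at x)))"

definition grad_sq :: "(real \<times> real \<Rightarrow> real) \<Rightarrow> real \<times> real \<Rightarrow> real" where
  "grad_sq f x = (frechet_derivative f (at x) (1, 0))\<^sup>2 + (frechet_derivative f (at x) (0, 1))\<^sup>2"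

definition robin_form_rect :: "real \<Rightarrow> real \<Rightarrow> real \<Rightarrow> (real \<times> real \<Rightarrow> real) \<Rightarrow> real" where
  "robin_form_rect L1 L2 \<alpha> f =
     integral (cbox (0, 0) (L1, L2)) (grad_sq f)
     + \<alpha> * (integral {0..L1} (\<lambda>t. (f (t, 0))\<^sup>2 + (f (t, L2))\<^sup>2)
            + integral {0..L2} (\<lambda>t. (f (0, t))\<^sup>2 + (f (L1, t))\<^sup>2))"

definition l2sq_rect :: "real \<Rightarrow> real \<Rightarrow> (real \<times> real \<Rightarrow> real) \<Rightarrow> real" where
  "l2sq_rect L1 L2 f = integral (cbox (0, 0) (L1, L2)) (\<lambda>x. (f x)\<^sup>2)"

definition robin_eig :: "nat \<Rightarrow> real \<Rightarrow> real \<Rightarrow> real \<Rightarrow> nat \<Rightarrow> real" where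
  "robin_eig m L1 L2 \<alpha> k =
    (INF \<phi> \<in> {\<phi> :: nat \<Rightarrow> nat \<Rightarrow> real \<times> real \<Rightarrow> real.
                (\<forall>j<k. \<forall>i<m. C1fun (\<phi> j i)) \<and>
                (\<forall>c :: nat \<Rightarrow> real.
                   (\<forall>i<m. \<forall>x\<in>cbox (0, 0) (L1, L2). (\<Sum>j<k. c j * \<phi> j i x) = 0)
                   \<longrightarrow> (\<forall>j<k. c j = 0))}.
      (SUP c \<in> {c :: nat \<Rightarrow> real. \<exists>j<k. c j \<noteq> 0}.
         (\<Sum>i<m. robin_form_rect L1 L2 \<alpha> (\<lambda>x. \<Sum>j<k. c j * \<phi> j i x))
         / (\<Sum>i<m. l2sq_rect L1 L2 (\<lambda>x. \<Sum>j<k. c j * \<phi> j i x))))"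

definition robin_eig_rect :: "real \<Rightarrow> real \<Rightarrow> real \<Rightarrow> nat \<Rightarrow> real" where
  "robin_eig_rect A a \<alpha> k = robin_eig 1 (sqrt A * a) (sqrt A / a) \<alpha> k"

definition robin_eig_squares :: "real \<Rightarrow> nat \<Rightarrow> real \<Rightarrow> nat \<Rightarrow> real" where
  "robin_eig_squares A n \<alpha> k = robin_eig n (sqrt (A / n)) (sqrt (A / n)) \<alpha> k"

end

theory Submission
  imports Defs
begin


lemma wirt_dir_aux:
  fixes g g' :: "real \<Rightarrow> real"
  assumes ab: "a < b"
    and gd: "\<And>x. x \<in> {a..b} \<Longrightarrow> (g has_real_derivative g' x) (at x within {a..b})"
    and gc: "continuous_on {a..b} g'" and ga: "g a = 0" and gb: "g b = 0" and dp: "\<delta> > 0"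
  shows "(pi/(b-a+2*\<delta>))^2 * integral {a..b} (\<lambda>x. (g x)^2) \<le> integral {a..b} (\<lambda>x. (g' x)^2)"
proof -
  define c where "c = pi/(b-a+2*\<delta>)"
  have cpos: "c > 0" using ab dp by (simp add: c_def)
  define th where "th x = c*(x-a+\<delta>)" for x
  have sinpos: "sin (th x) > 0" if "x \<in> {a..b}" for x
  proof (rule sin_gt_zero)
    show "0 < th x" using that cpos dp by (simp add: th_def)
    have "th x \<le> c*(b-a+\<delta>)" using that cpos by (simp add: th_def)
    also have "\<dots> < c*(b-a+2*\<delta>)" using cpos dp by simp
    also have "\<dots> = pi" using ab dp by (simp add: c_def)
    finally show "th x < pi" .
  qed
  define h where "h x = c * cos (th x) / sin (th x)" for x
  define P where "P x = h x * (g x)^2" for x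
  define P' where "P' x = (g' x)^2 - c^2 * (g x)^2 - (g' x - h x * g x)^2" for x
  have gcont: "continuous_on {a..b} g"
    using gd by (meson has_field_derivative_imp_has_derivative has_derivative_continuous continuous_on_eq_continuous_within)
  have hcont: "continuous_on {a..b} h"
  proof -
    have "\<forall>x\<in>{a..b}. sin (c*(x-a+\<delta>)) \<noteq> 0" using sinpos unfolding th_def by (metis less_irrefl)
    then show ?thesis unfolding h_def th_def by (auto intro!: continuous_intros)
  qed
  have Pd: "(P has_real_derivative P' x) (at x within {a..b})" if x: "x \<in> {a..b}" for x
  proof -
    have s: "sin (th x) \<noteq> 0" using sinpos[OF x] by simp
    have d1: "((\<lambda>x. cos (th x)) has_real_derivative (- sin (th x) * c)) (at x within {a..b})"
      unfolding th_def by (auto intro!: derivative_eq_intros)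
    have d2: "((\<lambda>x. sin (th x)) has_real_derivative (cos (th x) * c)) (at x within {a..b})"
      unfolding th_def by (auto intro!: derivative_eq_intros)
    have d3: "((\<lambda>x. c * (cos (th x) / sin (th x))) has_real_derivative
        c * (((- sin (th x) * c) * sin (th x) - cos (th x) * (cos (th x) * c)) / (sin (th x) * sin (th x)))) (at x within {a..b})"
      by (rule DERIV_cmult[OF DERIV_divide[OF d1 d2 s]])
    have d4: "((\<lambda>x. g x * g x) has_real_derivative (g' x * g x + g' x * g x)) (at x within {a..b})"
      by (rule DERIV_mult[OF gd[OF x] gd[OF x]])
    note d5 = DERIV_mult[OF d3 d4]
    have e: "(sin (th x))^2 + (cos (th x))^2 = 1" by simp
    have eq: "c * (((- sin (th x) * c) * sin (th x) - cos (th x) * (cos (th x) * c)) / (sin (th x) * sin (th x))) * (g x * g x)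
       + (g' x * g x + g' x * g x) * (c * (cos (th x) / sin (th x))) = P' x"
      unfolding P'_def h_def using s e
      by (simp add: field_simps power2_eq_square)
    have "((\<lambda>x. c * (cos (th x) / sin (th x)) * (g x * g x)) has_real_derivative P' x) (at x within {a..b})"
      using d5 eq by simp
    then show ?thesis unfolding P_def h_def by (simp add: power2_eq_square)
  qed
  have "(P' has_integral (P b - P a)) {a..b}"
    using ab Pd by (intro fundamental_theorem_of_calculus) (auto simp: has_real_derivative_iff_has_vector_derivative)
  then have i0: "integral {a..b} P' = 0" using ga gb by (simp add: P_def integral_unique)
  have int1: "(\<lambda>x. (g' x)^2) integrable_on {a..b}" by (intro integrable_continuous_real continuous_intros gc)
  have int2: "(\<lambda>x. c^2 * (g x)^2) integrable_on {a..b}" by (intro integrable_continuous_real continuous_intros gcont)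
  have int3: "(\<lambda>x. (g' x - h x * g x)^2) integrable_on {a..b}" by (intro integrable_continuous_real continuous_intros gcont gc hcont)
  have "integral {a..b} P' = integral {a..b} (\<lambda>x. (g' x)^2) - c^2 * integral {a..b} (\<lambda>x. (g x)^2)
          - integral {a..b} (\<lambda>x. (g' x - h x * g x)^2)"
    unfolding P'_def
    using int1 int2 int3 by (simp add: integral_diff integrable_diff)
  moreover have "integral {a..b} (\<lambda>x. (g' x - h x * g x)^2) \<ge> 0"
    using int3 by (intro integral_nonneg) auto
  ultimately show ?thesis using i0 by (simp add: c_def)
qed



lemma wirt_dir:
  fixes g g' :: "real \<Rightarrow> real"
  assumes ab: "a < b"
    and gd: "\<And>x. x \<in> {a..b} \<Longrightarrow> (g has_real_derivative g' x) (at x within {a..b})"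
    and gc: "continuous_on {a..b} g'" and ga: "g a = 0" and gb: "g b = 0"
  shows "(pi/(b-a))^2 * integral {a..b} (\<lambda>x. (g x)^2) \<le> integral {a..b} (\<lambda>x. (g' x)^2)"
proof (rule tendsto_le[of "at_right 0"])
  show "at_right (0::real) \<noteq> bot" by simp
  show "((\<lambda>\<delta>. (pi/(b-a+2*\<delta>))^2 * integral {a..b} (\<lambda>x. (g x)^2)) \<longlongrightarrow> (pi/(b-a))^2 * integral {a..b} (\<lambda>x. (g x)^2)) (at_right 0)"
    using ab by (auto intro!: tendsto_eq_intros)
  show "((\<lambda>\<delta>. integral {a..b} (\<lambda>x. (g' x)^2)) \<longlongrightarrow> integral {a..b} (\<lambda>x. (g' x)^2)) (at_right 0)" by simp
  show "\<forall>\<^sub>F \<delta> in at_right 0. (pi/(b-a+2*\<delta>))^2 * integral {a..b} (\<lambda>x. (g x)^2) \<le> integral {a..b} (\<lambda>x. (g' x)^2)"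
    using wirt_dir_aux[OF ab gd gc ga gb] eventually_at_right_less[of 0] by (auto elim!: eventually_mono)
qed

lemma var_identity:
  fixes f :: "real \<Rightarrow> real"
  assumes ab: "a < b" and fc: "continuous_on {a..b} f"
  shows "integral {a..b} (\<lambda>x. (f x - integral {a..b} f / (b-a))^2)
         = integral {a..b} (\<lambda>x. (f x)^2) - (integral {a..b} f)^2 / (b-a)"
proof -
  define m where "m = integral {a..b} f / (b-a)"
  have i1: "(\<lambda>x. (f x)^2) integrable_on {a..b}" by (intro integrable_continuous_real continuous_intros fc)
  have i2: "(\<lambda>x. 2 * m * f x) integrable_on {a..b}" by (intro integrable_continuous_real continuous_intros fc)
  have "(\<lambda>x. (f x - m)^2) = (\<lambda>x. (f x)^2 - 2 * m * f x + m^2)" by (auto simp: power2_eq_square algebra_simps)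
  then have "integral {a..b} (\<lambda>x. (f x - m)^2) = integral {a..b} (\<lambda>x. ((f x)^2 - 2 * m * f x) + m^2)" by simp
  also have "\<dots> = integral {a..b} (\<lambda>x. (f x)^2 - 2 * m * f x) + integral {a..b} (\<lambda>x. m^2)"
    by (rule integral_add) (auto intro: integrable_diff i1 i2)
  also have "integral {a..b} (\<lambda>x. (f x)^2 - 2 * m * f x) = integral {a..b} (\<lambda>x. (f x)^2) - integral {a..b} (\<lambda>x. 2 * m * f x)"
    by (rule integral_diff[OF i1 i2])
  also have "integral {a..b} (\<lambda>x. 2 * m * f x) = 2 * m * integral {a..b} f" by simp
  also have "integral {a..b} (\<lambda>x. m^2) = m^2 * (b-a)" using ab by simp
  finally have "integral {a..b} (\<lambda>x. (f x - m)^2) = integral {a..b} (\<lambda>x. (f x)^2) - 2 * m * integral {a..b} f + m^2 * (b-a)" .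
  also have "\<dots> = integral {a..b} (\<lambda>x. (f x)^2) - (integral {a..b} f)^2 / (b-a)"
  proof -
    have aux: "d > 0 \<Longrightarrow> - 2 * (z/d) * z + (z/d)^2 * d = -((z^2)/d)" for z d :: real
      by (simp add: power2_eq_square field_simps)
    show ?thesis using aux[of "b-a" "integral {a..b} f"] ab by (simp add: m_def)
  qed
  finally show ?thesis by (simp add: m_def)
qed

lemma jensen_int:
  fixes f :: "real \<Rightarrow> real"
  assumes ab: "a < b" and fc: "continuous_on {a..b} f"
  shows "(integral {a..b} f)^2 \<le> (b-a) * integral {a..b} (\<lambda>x. (f x)^2)"
proof -
  have "0 \<le> integral {a..b} (\<lambda>x. (f x - integral {a..b} f / (b-a))^2)"
    by (intro integral_nonneg integrable_continuous_real continuous_intros fc) auto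
  then have "0 \<le> integral {a..b} (\<lambda>x. (f x)^2) - (integral {a..b} f)^2 / (b-a)"
    using var_identity[OF ab fc] by simp
  then show ?thesis using ab by (simp add: field_simps)
qed

lemma wirt_neu:
  fixes g g' :: "real \<Rightarrow> real"
  assumes ab: "a < b"
    and gd: "\<And>x. x \<in> {a..b} \<Longrightarrow> (g has_real_derivative g' x) (at x within {a..b})"
    and gc: "continuous_on {a..b} g'"
  shows "(pi/(b-a))^2 * (integral {a..b} (\<lambda>x. (g x)^2) - (integral {a..b} g)^2 / (b-a))
         \<le> integral {a..b} (\<lambda>x. (g' x)^2)"
proof -
  have gcont: "continuous_on {a..b} g"
    using gd by (meson has_field_derivative_imp_has_derivative has_derivative_continuous continuous_on_eq_continuous_within)
  define m where "m = integral {a..b} g / (b-a)"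
  define f where "f x = g x - m" for x
  have fc: "continuous_on {a..b} f" unfolding f_def by (intro continuous_intros gcont)
  have ig: "g integrable_on {a..b}" by (intro integrable_continuous_real gcont)
  define F where "F x = integral {a..x} f" for x
  have Fd: "(F has_real_derivative f x) (at x within {a..b})" if "x \<in> {a..b}" for x
    unfolding F_def by (rule integral_has_real_derivative[OF fc that])
  have Fa: "F a = 0" by (simp add: F_def)
  have Fb: "F b = 0"
  proof -
    have "F b = integral {a..b} (\<lambda>x. g x - m)" by (simp add: F_def f_def[abs_def])
    also have "\<dots> = integral {a..b} g - integral {a..b} (\<lambda>x. m)" by (rule integral_diff[OF ig]) (intro integrable_continuous_real continuous_intros)
    also have "\<dots> = integral {a..b} g - m * (b-a)" using ab by simp
    finally show ?thesis using ab by (simp add: m_def)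
  qed
  have fd: "(f has_real_derivative g' x) (at x within {a..b})" if "x \<in> {a..b}" for x
    unfolding f_def using gd[OF that] by (auto intro!: derivative_eq_intros)
  have Fcont: "continuous_on {a..b} F"
    using Fd by (meson has_field_derivative_imp_has_derivative has_derivative_continuous continuous_on_eq_continuous_within)
  define I where "I = integral {a..b} (\<lambda>x. (f x)^2)"
  define X where "X = integral {a..b} (\<lambda>x. (F x)^2)"
  define Y where "Y = integral {a..b} (\<lambda>x. (g' x)^2)"
  define t where "t = (pi/(b-a))^2"
  have tpos: "t > 0" using ab by (simp add: t_def)
  have dirF: "t * X \<le> I" unfolding t_def X_def I_def by (rule wirt_dir[OF ab Fd fc Fa Fb])
  have dd: "((\<lambda>x. F x * f x) has_vector_derivative (f x)^2 + F x * g' x) (at x within {a..b})" if x: "x \<in> {a..b}" for x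
  proof -
    have "((\<lambda>x. F x * f x) has_real_derivative (f x)^2 + F x * g' x) (at x within {a..b})"
      using DERIV_mult[OF Fd[OF x] fd[OF x]] by (simp add: power2_eq_square algebra_simps)
    then show ?thesis by (simp add: has_real_derivative_iff_has_vector_derivative)
  qed
  have "((\<lambda>x. (f x)^2 + F x * g' x) has_integral (F b * f b - F a * f a)) {a..b}"
    using ab dd by (intro fundamental_theorem_of_calculus) auto
  then have i0: "integral {a..b} (\<lambda>x. (f x)^2 + F x * g' x) = 0" using Fa Fb by (simp add: integral_unique)
  have if2: "(\<lambda>x. (f x)^2) integrable_on {a..b}" by (intro integrable_continuous_real continuous_intros fc)
  have iFg: "(\<lambda>x. F x * g' x) integrable_on {a..b}" by (intro integrable_continuous_real continuous_intros Fcont gc)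
  have IFg: "I = - integral {a..b} (\<lambda>x. F x * g' x)"
    using i0 if2 iFg by (simp add: I_def integral_add)
  have pw: "- 2 * (F x * g' x) \<le> t * (F x)^2 + (g' x)^2 / t" for x
  proof -
    have "0 \<le> (t * F x + g' x)^2 / t" using tpos by simp
    also have "(t * F x + g' x)^2 / t = t * (F x)^2 + 2 * (F x * g' x) + (g' x)^2 / t"
      using tpos by (simp add: power2_eq_square field_simps)
    finally show ?thesis by simp
  qed
  have "integral {a..b} (\<lambda>x. - 2 * (F x * g' x)) \<le> integral {a..b} (\<lambda>x. t * (F x)^2 + (g' x)^2 / t)"
    using tpos by (intro integral_le integrable_continuous_real continuous_intros Fcont gc ballI pw) auto
  then have "2 * I \<le> t * X + Y / t"
  proof -
    have "integral {a..b} (\<lambda>x. t * (F x)^2 + (g' x)^2 / t) = integral {a..b} (\<lambda>x. t * (F x)^2) + integral {a..b} (\<lambda>x. (g' x)^2 / t)"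
      using tpos by (intro integral_add integrable_continuous_real continuous_intros Fcont gc) auto
    also have "\<dots> = t * X + Y / t" by (simp add: X_def Y_def)
    finally show ?thesis using IFg \<open>integral {a..b} (\<lambda>x. - 2 * (F x * g' x)) \<le> _\<close> by simp
  qed
  then have "I \<le> Y / t" using dirF by simp
  then have "t * I \<le> Y" using tpos by (simp add: field_simps)
  moreover have "I = integral {a..b} (\<lambda>x. (g x)^2) - (integral {a..b} g)^2 / (b-a)"
    unfolding I_def f_def m_def by (rule var_identity[OF ab gcont])
  ultimately show ?thesis by (simp add: t_def Y_def)
qed



lemma C1fun_partials:
  assumes "C1fun u"
  obtains ux uy where "continuous_on UNIV u" "continuous_on UNIV ux" "continuous_on UNIV uy"
    "\<And>x y. ((\<lambda>t. u (t,y)) has_real_derivative ux (x,y)) (at x)"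
    "\<And>x y. ((\<lambda>t. u (x,t)) has_real_derivative uy (x,y)) (at y)"
    "\<And>p. grad_sq u p = (ux p)^2 + (uy p)^2"
proof -
  obtain D where Dc: "continuous_on UNIV D" and Dd: "\<And>x. (u has_derivative blinfun_apply (D x)) (at x)"
    using assms unfolding C1fun_def by blast
  define ux where "ux p = blinfun_apply (D p) (1,0)" for p
  define uy where "uy p = blinfun_apply (D p) (0,1)" for p
  have "continuous_on UNIV u"
    using Dd by (meson has_derivative_continuous continuous_at_imp_continuous_on)
  moreover have "continuous_on UNIV ux" unfolding ux_def by (intro continuous_intros Dc)
  moreover have "continuous_on UNIV uy" unfolding uy_def by (intro continuous_intros Dc)
  moreover have "((\<lambda>t. u (t,y)) has_real_derivative ux (x,y)) (at x)" for x y
  proof -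
    have p: "((\<lambda>t. (t,y)) has_derivative (\<lambda>h. (h,0))) (at x)"
      by (auto intro!: derivative_eq_intros)
    have "((\<lambda>t. u (t,y)) has_derivative (\<lambda>h. blinfun_apply (D (x,y)) (h,0))) (at x)"
      using has_derivative_compose[OF p Dd] by simp
    moreover have "(\<lambda>h. blinfun_apply (D (x,y)) (h,0)) = (\<lambda>h. ux (x,y) * h)"
    proof
      fix h :: real
      have "(h,0::real) = h *\<^sub>R (1,0)" by simp
      then show "blinfun_apply (D (x,y)) (h,0) = ux (x,y) * h"
        unfolding ux_def by (metis blinfun.scaleR_right mult.commute real_scaleR_def)
    qed
    ultimately show ?thesis by (simp add: has_field_derivative_def)
  qed
  moreover have "((\<lambda>t. u (x,t)) has_real_derivative uy (x,y)) (at y)" for x y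
  proof -
    have p: "((\<lambda>t. (x,t)) has_derivative (\<lambda>h. (0,h))) (at y)"
      by (auto intro!: derivative_eq_intros)
    have "((\<lambda>t. u (x,t)) has_derivative (\<lambda>h. blinfun_apply (D (x,y)) (0,h))) (at y)"
      using has_derivative_compose[OF p Dd] by simp
    moreover have "(\<lambda>h. blinfun_apply (D (x,y)) (0,h)) = (\<lambda>h. uy (x,y) * h)"
    proof
      fix h :: real
      have "(0::real,h) = h *\<^sub>R (0,1)" by simp
      then show "blinfun_apply (D (x,y)) (0,h) = uy (x,y) * h"
        unfolding uy_def by (metis blinfun.scaleR_right mult.commute real_scaleR_def)
    qed
    ultimately show ?thesis by (simp add: has_field_derivative_def)
  qed
  moreover have "grad_sq u p = (ux p)^2 + (uy p)^2" for p
    unfolding grad_sq_def ux_def uy_def using frechet_derivative_at[OF Dd[of p]] by simp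
  ultimately show ?thesis using that by blast
qed

lemma C1fun_sum:
  assumes "\<And>j. j < k \<Longrightarrow> C1fun (\<phi> j)"
  shows "C1fun (\<lambda>x. \<Sum>j<k. c j * \<phi> j x)"
proof -
  have "\<forall>j. \<exists>D. j < k \<longrightarrow> continuous_on UNIV D \<and> (\<forall>x. (\<phi> j has_derivative blinfun_apply (D x)) (at x))"
    using assms unfolding C1fun_def by blast
  then obtain D where D: "\<And>j. j < k \<Longrightarrow> continuous_on UNIV (D j) \<and> (\<forall>x. (\<phi> j has_derivative blinfun_apply (D j x)) (at x))"
    by metis
  define E where "E x = (\<Sum>j<k. c j *\<^sub>R D j x)" for x
  have "continuous_on UNIV E" unfolding E_def using D by (intro continuous_intros) auto
  moreover have "((\<lambda>x. \<Sum>j<k. c j * \<phi> j x) has_derivative blinfun_apply (E x)) (at x)" for x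
  proof -
    have "((\<lambda>x. \<Sum>j<k. c j * \<phi> j x) has_derivative (\<lambda>h. \<Sum>j<k. c j * blinfun_apply (D j x) h)) (at x)"
      by (intro has_derivative_sum has_derivative_mult_right) (metis D lessThan_iff)
    moreover have "(\<lambda>h. \<Sum>j<k. c j * blinfun_apply (D j x) h) = blinfun_apply (E x)"
      by (auto simp: E_def blinfun.sum_left blinfun.scaleR_left)
    ultimately show ?thesis by simp
  qed
  ultimately show ?thesis unfolding C1fun_def by blast
qed



lemma fubini_cont:
  fixes F :: "real \<times> real \<Rightarrow> real"
  assumes "continuous_on UNIV F"
  shows "integral (cbox (a,c) (b,d)) F = integral {a..b} (\<lambda>x. integral {c..d} (\<lambda>y. F (x,y)))"
  using integral_prod_continuous[OF continuous_on_subset[OF assms], of a c b d] by (simp add: cbox_interval)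

lemma param_cont:
  fixes F :: "real \<times> real \<Rightarrow> real"
  assumes "continuous_on UNIV F"
  shows "continuous_on S (\<lambda>x. integral {c..d} (\<lambda>y. F (x,y)))"
proof -
  have "continuous_on (S \<times> cbox c d) (\<lambda>(x, t). F (x,t))"
    using continuous_on_subset[OF assms] by (simp add: case_prod_eta)
  from integral_continuous_on_param[OF this] show ?thesis by (simp add: cbox_interval)
qed

lemma param_int:
  fixes F :: "real \<times> real \<Rightarrow> real"
  assumes "continuous_on UNIV F"
  shows "(\<lambda>x. integral {c..d} (\<lambda>y. F (x,y))) integrable_on {a..b}"
  by (intro integrable_continuous_real param_cont assms)

lemma cell_poincare:
  fixes u ux uy :: "real \<times> real \<Rightarrow> real"
  assumes uc: "continuous_on UNIV u" and uxc: "continuous_on UNIV ux" and uyc: "continuous_on UNIV uy"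
    and dx: "\<And>x y. ((\<lambda>t. u (t,y)) has_real_derivative ux (x,y)) (at x)"
    and dy: "\<And>x y. ((\<lambda>t. u (x,t)) has_real_derivative uy (x,y)) (at y)"
    and x01: "x0 < x1" and y01: "y0 < y1"
    and zero: "integral (cbox (x0,y0) (x1,y1)) u = 0"
    and mu1: "\<mu> \<le> (pi/(x1-x0))^2" and mu2: "\<mu> \<le> (pi/(y1-y0))^2"
  shows "\<mu> * integral (cbox (x0,y0) (x1,y1)) (\<lambda>p. (u p)^2)
         \<le> integral (cbox (x0,y0) (x1,y1)) (\<lambda>p. (ux p)^2 + (uy p)^2)"
proof -
  define l1 where "l1 = x1 - x0"
  define l2 where "l2 = y1 - y0"
  have l1p: "l1 > 0" and l2p: "l2 > 0" using x01 y01 by (auto simp: l1_def l2_def)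
  have u2c: "continuous_on UNIV (\<lambda>p. (u p)^2)" by (intro continuous_intros uc)
  have ux2c: "continuous_on UNIV (\<lambda>p. (ux p)^2)" by (intro continuous_intros uxc)
  have uy2c: "continuous_on UNIV (\<lambda>p. (uy p)^2)" by (intro continuous_intros uyc)
  define h where "h x = integral {y0..y1} (\<lambda>y. u (x,y))" for x
  define h' where "h' x = integral {y0..y1} (\<lambda>y. ux (x,y))" for x
  define U2 where "U2 = integral (cbox (x0,y0) (x1,y1)) (\<lambda>p. (u p)^2)"
  define Gx where "Gx = integral (cbox (x0,y0) (x1,y1)) (\<lambda>p. (ux p)^2)"
  define Gy where "Gy = integral (cbox (x0,y0) (x1,y1)) (\<lambda>p. (uy p)^2)"
  define H where "H = integral {x0..x1} (\<lambda>x. (h x)^2)"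
  have hc: "continuous_on S h" for S unfolding h_def by (rule param_cont[OF uc])
  have h'c: "continuous_on S h'" for S unfolding h'_def by (rule param_cont[OF uxc])
  have uxt: "continuous_on {y0..y1} (\<lambda>y. f (x, y))" if "continuous_on UNIV f" for f :: "real \<times> real \<Rightarrow> real" and x
    by (rule continuous_on_subset[OF continuous_on_compose2[OF that, of UNIV "\<lambda>y. (x,y)"]]) (auto intro!: continuous_intros)
  have A1: "(pi/l2)^2 * (integral {y0..y1} (\<lambda>y. (u (x,y))^2) - (h x)^2 / l2) \<le> integral {y0..y1} (\<lambda>y. (uy (x,y))^2)" for x
    unfolding h_def l2_def
    by (rule wirt_neu[OF y01 has_field_derivative_at_within[OF dy] uxt[OF uyc]])
  have iA: "(pi/l2)^2 * (U2 - H / l2) \<le> Gy"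
  proof -
    have "integral {x0..x1} (\<lambda>x. (pi/l2)^2 * (integral {y0..y1} (\<lambda>y. (u (x,y))^2) - (h x)^2 / l2))
          \<le> integral {x0..x1} (\<lambda>x. integral {y0..y1} (\<lambda>y. (uy (x,y))^2))"
      using A1 l2p by (intro integral_le integrable_continuous_real continuous_intros param_cont u2c uy2c hc uc uyc) auto
    moreover have "integral {x0..x1} (\<lambda>x. (pi/l2)^2 * (integral {y0..y1} (\<lambda>y. (u (x,y))^2) - (h x)^2 / l2))
        = (pi/l2)^2 * (integral {x0..x1} (\<lambda>x. integral {y0..y1} (\<lambda>y. (u (x,y))^2)) - integral {x0..x1} (\<lambda>x. (h x)^2) / l2)"
    proof -
      have "integral {x0..x1} (\<lambda>x. integral {y0..y1} (\<lambda>y. (u (x,y))^2) - (h x)^2 / l2)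
           = integral {x0..x1} (\<lambda>x. integral {y0..y1} (\<lambda>y. (u (x,y))^2)) - integral {x0..x1} (\<lambda>x. (h x)^2 / l2)"
        by (intro integral_diff integrable_continuous_real continuous_intros param_cont u2c hc uc) (use l2p in auto)
      then show ?thesis by simp
    qed
    ultimately show ?thesis
      unfolding U2_def Gy_def H_def using fubini_cont[OF u2c] fubini_cont[OF uy2c] using l2p by simp
  qed
  have hd: "(h has_real_derivative h' x) (at x within {x0..x1})" for x
  proof -
    have "(h has_real_derivative h' x) (at x within UNIV)"
      unfolding h_def h'_def
    proof (rule leibniz_rule_field_derivative[of UNIV y0 y1 "\<lambda>x t. u (x,t)" "\<lambda>x t. ux (x,t)" x, unfolded cbox_interval])
      show "\<And>x t. x \<in> UNIV \<Longrightarrow> t \<in> {y0..y1} \<Longrightarrow> ((\<lambda>x. u (x, t)) has_real_derivative ux (x, t)) (at x within UNIV)"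
        using dx by simp
      show "\<And>x. x \<in> UNIV \<Longrightarrow> (\<lambda>t. u (x,t)) integrable_on {y0..y1}"
        by (intro integrable_continuous_real uxt[OF uc])
      show "continuous_on (UNIV \<times> {y0..y1}) (\<lambda>(x, t). ux (x, t))"
        by (simp add: case_prod_eta continuous_on_subset[OF uxc])
    qed auto
    then show ?thesis by (simp add: has_field_derivative_at_within)
  qed
  have hint0: "integral {x0..x1} h = 0"
    using zero fubini_cont[OF uc, of x0 y0 x1 y1] by (simp add: h_def[abs_def])
  have B1: "(pi/l1)^2 * H \<le> integral {x0..x1} (\<lambda>x. (h' x)^2)"
    using wirt_neu[OF x01 hd h'c] hint0 by (simp add: H_def l1_def)
  have B2: "integral {x0..x1} (\<lambda>x. (h' x)^2) \<le> l2 * Gx"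
  proof -
    have "integral {x0..x1} (\<lambda>x. (h' x)^2) \<le> integral {x0..x1} (\<lambda>x. l2 * integral {y0..y1} (\<lambda>y. (ux (x,y))^2))"
      unfolding h'_def l2_def
      using jensen_int[OF y01 uxt[OF uxc]]
      by (intro integral_le integrable_continuous_real continuous_intros param_cont ux2c h'c[unfolded h'_def]) auto
    also have "\<dots> = l2 * Gx" unfolding Gx_def using fubini_cont[OF ux2c] by simp
    finally show ?thesis .
  qed
  have C: "H \<le> l2 * U2"
  proof -
    have "H \<le> integral {x0..x1} (\<lambda>x. l2 * integral {y0..y1} (\<lambda>y. (u (x,y))^2))"
      unfolding H_def h_def l2_def
      using jensen_int[OF y01 uxt[OF uc]]
      by (intro integral_le integrable_continuous_real continuous_intros param_cont u2c hc[unfolded h_def]) auto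
    also have "\<dots> = l2 * U2" unfolding U2_def using fubini_cont[OF u2c] by simp
    finally show ?thesis .
  qed
  have H0: "H \<ge> 0" unfolding H_def by (intro integral_nonneg integrable_continuous_real continuous_intros hc) auto
  have D0: "U2 - H / l2 \<ge> 0" using C l2p by (simp add: field_simps)
  have "\<mu> * U2 = \<mu> * (U2 - H / l2) + \<mu> * (H / l2)" using l2p by (simp add: field_simps)
  also have "\<dots> \<le> (pi/l2)^2 * (U2 - H / l2) + (pi/l1)^2 * (H / l2)"
    using mu1 mu2 D0 H0 l2p unfolding l1_def l2_def
    by (intro add_mono mult_right_mono) auto
  also have "\<dots> \<le> Gy + Gx"
  proof -
    have "(pi/l1)^2 * (H / l2) = ((pi/l1)^2 * H) / l2" by simp
    also have "\<dots> \<le> (l2 * Gx) / l2" using B1 B2 l2p by (intro divide_right_mono) auto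
    also have "\<dots> = Gx" using l2p by simp
    finally show ?thesis using iA by simp
  qed
  also have "Gy + Gx = integral (cbox (x0,y0) (x1,y1)) (\<lambda>p. (ux p)^2 + (uy p)^2)"
    unfolding Gx_def Gy_def
    by (subst integral_add) (auto intro!: integrable_continuous continuous_on_subset[OF ux2c] continuous_on_subset[OF uy2c])
  finally show ?thesis by (simp add: U2_def)
qed



lemma int_split_1d:
  fixes f :: "real \<Rightarrow> real"
  assumes fc: "continuous_on UNIV f" and l: "l \<ge> 0"
  shows "integral {a..a + real P * l} f = (\<Sum>p<P. integral {a + real p * l .. a + real (Suc p) * l} f)"
proof (induction P)
  case 0 then show ?case by simp
next
  case (Suc P)
  have "integral {a..a + real P * l} f + integral {a + real P * l..a + real (Suc P) * l} f
        = integral {a..a + real (Suc P) * l} f"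
  proof (rule Henstock_Kurzweil_Integration.integral_combine)
    show "a \<le> a + real P * l" using l by simp
    show "a + real P * l \<le> a + real (Suc P) * l" using l by (simp add: algebra_simps)
    show "f integrable_on {a..a + real (Suc P) * l}"
      by (intro integrable_continuous_real continuous_on_subset[OF fc]) auto
  qed
  then show ?case using Suc by simp
qed

lemma grid_sum:
  fixes F :: "real \<times> real \<Rightarrow> real"
  assumes Fc: "continuous_on UNIV F" and l1: "l1 \<ge> 0" and l2: "l2 \<ge> 0"
  shows "integral (cbox (0,0) (real P * l1, real Q * l2)) F
    = (\<Sum>p<P. \<Sum>q<Q. integral (cbox (real p * l1, real q * l2) (real (Suc p) * l1, real (Suc q) * l2)) F)"
proof -
  have yc: "continuous_on UNIV (\<lambda>y. F (x, y))" for x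
    by (rule continuous_on_compose2[OF Fc]) (auto intro!: continuous_intros)
  have "integral (cbox (0,0) (real P * l1, real Q * l2)) F
      = integral {0..real P * l1} (\<lambda>x. integral {0..real Q * l2} (\<lambda>y. F (x,y)))"
    by (rule fubini_cont[OF Fc])
  also have "\<dots> = integral {0..real P * l1} (\<lambda>x. \<Sum>q<Q. integral {real q * l2..real (Suc q) * l2} (\<lambda>y. F (x,y)))"
    using int_split_1d[OF yc l2, of 0 Q] by simp
  also have "\<dots> = (\<Sum>q<Q. integral {0..real P * l1} (\<lambda>x. integral {real q * l2..real (Suc q) * l2} (\<lambda>y. F (x,y))))"
    by (intro integral_sum param_int Fc) auto
  also have "\<dots> = (\<Sum>q<Q. \<Sum>p<P. integral {real p * l1..real (Suc p) * l1} (\<lambda>x. integral {real q * l2..real (Suc q) * l2} (\<lambda>y. F (x,y))))"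
    using int_split_1d[OF param_cont[OF Fc] l1, of 0 P] by simp
  also have "\<dots> = (\<Sum>q<Q. \<Sum>p<P. integral (cbox (real p * l1, real q * l2) (real (Suc p) * l1, real (Suc q) * l2)) F)"
    by (simp add: fubini_cont[OF Fc])
  also have "\<dots> = (\<Sum>p<P. \<Sum>q<Q. integral (cbox (real p * l1, real q * l2) (real (Suc p) * l1, real (Suc q) * l2)) F)"
    by (rule sum.swap)
  finally show ?thesis .
qed

lemma rect_lower:
  fixes P Q :: nat
  assumes u: "C1fun u" and L1: "L1 > 0" and L2: "L2 > 0" and P: "P > 0" and Q: "Q > 0"
    and mu1: "\<mu> \<le> (pi/(L1/P))^2" and mu2: "\<mu> \<le> (pi/(L2/Q))^2"
    and zero: "\<And>p q. p < P \<Longrightarrow> q < Q \<Longrightarrow>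
       integral (cbox (real p * (L1/P), real q * (L2/Q)) (real (Suc p) * (L1/P), real (Suc q) * (L2/Q))) u = 0"
  shows "\<mu> * integral (cbox (0,0) (L1,L2)) (\<lambda>x. (u x)^2) \<le> integral (cbox (0,0) (L1,L2)) (grad_sq u)"
proof -
  obtain ux uy where uc: "continuous_on UNIV u" and uxc: "continuous_on UNIV ux" and uyc: "continuous_on UNIV uy"
    and dx: "\<And>x y. ((\<lambda>t. u (t,y)) has_real_derivative ux (x,y)) (at x)"
    and dy: "\<And>x y. ((\<lambda>t. u (x,t)) has_real_derivative uy (x,y)) (at y)"
    and gs: "\<And>p. grad_sq u p = (ux p)^2 + (uy p)^2"
    using C1fun_partials[OF u] by blast
  define l1 where "l1 = L1 / P"
  define l2 where "l2 = L2 / Q"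
  have l1p: "l1 > 0" and l2p: "l2 > 0" using L1 L2 P Q by (auto simp: l1_def l2_def)
  have eL1: "L1 = real P * l1" and eL2: "L2 = real Q * l2" using P Q by (auto simp: l1_def l2_def)
  have g: "grad_sq u = (\<lambda>p. (ux p)^2 + (uy p)^2)" using gs by auto
  have "\<mu> * integral (cbox (0,0) (L1,L2)) (\<lambda>x. (u x)^2)
     = (\<Sum>p<P. \<Sum>q<Q. \<mu> * integral (cbox (real p * l1, real q * l2) (real (Suc p) * l1, real (Suc q) * l2)) (\<lambda>x. (u x)^2))"
    unfolding eL1 eL2 by (subst grid_sum) (auto intro!: continuous_intros uc simp: l1p l2p less_imp_le sum_distrib_left)
  also have "\<dots> \<le> (\<Sum>p<P. \<Sum>q<Q. integral (cbox (real p * l1, real q * l2) (real (Suc p) * l1, real (Suc q) * l2)) (\<lambda>x. (ux x)^2 + (uy x)^2))"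
  proof (intro sum_mono)
    fix p q assume p: "p \<in> {..<P}" and q: "q \<in> {..<Q}"
    have e1: "real (Suc p) * l1 - real p * l1 = l1" and e2: "real (Suc q) * l2 - real q * l2 = l2"
      by (simp_all add: algebra_simps)
    show "\<mu> * integral (cbox (real p * l1, real q * l2) (real (Suc p) * l1, real (Suc q) * l2)) (\<lambda>x. (u x)^2)
        \<le> integral (cbox (real p * l1, real q * l2) (real (Suc p) * l1, real (Suc q) * l2)) (\<lambda>x. (ux x)^2 + (uy x)^2)"
      by (rule cell_poincare[OF uc uxc uyc dx dy])
         (use l1p l2p zero[of p q] p q mu1 mu2 e1 e2 in \<open>auto simp: l1_def l2_def\<close>)
  qed
  also have "\<dots> = integral (cbox (0,0) (L1,L2)) (grad_sq u)"
    unfolding eL1 eL2 g by (subst grid_sum) (auto intro!: continuous_intros uxc uyc simp: l1p l2p less_imp_le)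
  finally show ?thesis .
qed



lemma C1fun_D:
  assumes "C1fun u"
  obtains D where "continuous_on UNIV D" "\<And>x. (u has_derivative blinfun_apply (D x)) (at x)"
    "\<And>x. frechet_derivative u (at x) = blinfun_apply (D x)"
proof -
  obtain D where Dc: "continuous_on UNIV D" and Dd: "\<And>x. (u has_derivative blinfun_apply (D x)) (at x)"
    using assms unfolding C1fun_def by blast
  then show ?thesis using that frechet_derivative_at[OF Dd] by metis
qed

lemma C1fun_fd_cont:
  assumes "C1fun u"
  shows "continuous_on UNIV (\<lambda>p. frechet_derivative u (at p) v)"
proof -
  obtain D where "continuous_on UNIV D" "\<And>x. frechet_derivative u (at x) = blinfun_apply (D x)"
    using C1fun_D[OF assms] by metis
  then show ?thesis by (simp add: continuous_intros)
qed

lemma C1fun_cont: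
  assumes "C1fun u"
  shows "continuous_on UNIV u"
  using assms unfolding C1fun_def
  by (meson has_derivative_continuous continuous_at_imp_continuous_on)

lemma C1fun_grad_cont:
  assumes "C1fun u"
  shows "continuous_on UNIV (grad_sq u)"
  unfolding grad_sq_def[abs_def] by (intro continuous_intros C1fun_fd_cont[OF assms])

lemma fd_sum:
  assumes "\<And>j. j < k \<Longrightarrow> C1fun (f j)"
  shows "frechet_derivative (\<lambda>x. \<Sum>j<k. c j * f j x) (at p) v = (\<Sum>j<k. c j * frechet_derivative (f j) (at p) v)"
proof -
  have "\<forall>j. \<exists>D. j < k \<longrightarrow> continuous_on UNIV D \<and> (\<forall>x. (f j has_derivative blinfun_apply (D x)) (at x))"
    using assms unfolding C1fun_def by blast
  then obtain D where D: "\<And>j. j < k \<Longrightarrow> (\<forall>x. (f j has_derivative blinfun_apply (D j x)) (at x))"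
    by metis
  have fj: "frechet_derivative (f j) (at p) = blinfun_apply (D j p)" if "j < k" for j
    using frechet_derivative_at D that by metis
  have "((\<lambda>x. \<Sum>j<k. c j * f j x) has_derivative (\<lambda>h. \<Sum>j<k. c j * blinfun_apply (D j p) h)) (at p)"
    by (intro has_derivative_sum has_derivative_mult_right) (metis D lessThan_iff)
  from frechet_derivative_at[OF this] show ?thesis
    by (metis (no_types, lifting) fj lessThan_iff sum.cong)
qed

lemma sq_sum_bound:
  fixes c a :: "nat \<Rightarrow> real"
  assumes "\<And>j. j < k \<Longrightarrow> \<bar>c j\<bar> \<le> M"
  shows "(\<Sum>j<k. c j * a j)^2 \<le> M^2 * (\<Sum>j<k. \<bar>a j\<bar>)^2"
proof -
  have "\<bar>\<Sum>j<k. c j * a j\<bar> \<le> (\<Sum>j<k. \<bar>c j\<bar> * \<bar>a j\<bar>)"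
    by (metis (no_types, lifting) abs_mult sum.cong sum_abs)
  also have "\<dots> \<le> (\<Sum>j<k. M * \<bar>a j\<bar>)"
    using assms by (intro sum_mono mult_right_mono) auto
  also have "\<dots> = M * (\<Sum>j<k. \<bar>a j\<bar>)" by (simp add: sum_distrib_left)
  finally have "(\<bar>\<Sum>j<k. c j * a j\<bar>)^2 \<le> (M * (\<Sum>j<k. \<bar>a j\<bar>))^2"
    by (intro power_mono) auto
  then show ?thesis by (simp add: power_mult_distrib)
qed

lemma lin_solve:
  fixes a :: "nat \<Rightarrow> nat \<Rightarrow> real"
  assumes "finite J" "card J > M"
  shows "\<exists>c. (\<exists>j\<in>J. c j \<noteq> 0) \<and> (\<forall>j. j \<notin> J \<longrightarrow> c j = 0) \<and> (\<forall>r<M. (\<Sum>j\<in>J. a r j * c j) = 0)"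
  using assms
proof (induction M arbitrary: J a)
  case 0
  then obtain j0 where "j0 \<in> J" by fastforce
  then show ?case by (intro exI[of _ "\<lambda>j. if j = j0 then 1 else 0"]) auto
next
  case (Suc M)
  show ?case
  proof (cases "\<forall>j\<in>J. a M j = 0")
    case True
    obtain c where c: "(\<exists>j\<in>J. c j \<noteq> 0)" "(\<forall>j. j \<notin> J \<longrightarrow> c j = 0)" "(\<forall>r<M. (\<Sum>j\<in>J. a r j * c j) = 0)"
      using Suc.IH[of J a] Suc.prems by auto
    then show ?thesis using True by (intro exI[of _ c]) (auto simp: less_Suc_eq)
  next
    case False
    then obtain j0 where j0: "j0 \<in> J" "a M j0 \<noteq> 0" by auto
    define J' where "J' = J - {j0}"
    have fJ': "finite J'" using Suc.prems by (simp add: J'_def)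
    have cJ': "card J' > M" using Suc.prems j0 by (simp add: J'_def card_Diff_singleton)
    define a' where "a' r j = a r j - a r j0 * a M j / a M j0" for r j
    obtain c' where c': "(\<exists>j\<in>J'. c' j \<noteq> 0)" "(\<forall>j. j \<notin> J' \<longrightarrow> c' j = 0)" "(\<forall>r<M. (\<Sum>j\<in>J'. a' r j * c' j) = 0)"
      using Suc.IH[OF fJ' cJ', of a'] by auto
    define c where "c = c'(j0 := - (\<Sum>j\<in>J'. a M j * c' j) / a M j0)"
    have split: "(\<Sum>j\<in>J. a r j * c j) = a r j0 * c j0 + (\<Sum>j\<in>J'. a r j * c' j)" for r
    proof -
      have "(\<Sum>j\<in>J. a r j * c j) = a r j0 * c j0 + (\<Sum>j\<in>J'. a r j * c j)"
        unfolding J'_def using Suc.prems j0 by (simp add: sum.remove)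
      moreover have "(\<Sum>j\<in>J'. a r j * c j) = (\<Sum>j\<in>J'. a r j * c' j)"
        by (intro sum.cong) (auto simp: c_def J'_def)
      ultimately show ?thesis by simp
    qed
    have rowM: "(\<Sum>j\<in>J. a M j * c j) = 0" using split[of M] j0 by (simp add: c_def)
    have rows: "(\<Sum>j\<in>J. a r j * c j) = 0" if "r < M" for r
    proof -
      have "(\<Sum>j\<in>J'. a' r j * c' j) = (\<Sum>j\<in>J'. a r j * c' j) - a r j0 / a M j0 * (\<Sum>j\<in>J'. a M j * c' j)"
        by (simp add: a'_def algebra_simps sum_subtractf sum_distrib_left)
      then have "(\<Sum>j\<in>J'. a r j * c' j) = a r j0 / a M j0 * (\<Sum>j\<in>J'. a M j * c' j)"
        using c'(3) that by simp
      then show ?thesis using split[of r] j0 by (simp add: c_def)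
    qed
    have nz: "\<exists>j\<in>J. c j \<noteq> 0" using c'(1) by (auto simp: c_def J'_def)
    have out: "\<forall>j. j \<notin> J \<longrightarrow> c j = 0" using c'(2) j0 by (auto simp: c_def J'_def)
    show ?thesis using nz out rowM rows by (intro exI[of _ c]) (auto simp: less_Suc_eq)
  qed
qed



lemma coord_cont [continuous_intros]: "continuous_on S (\<lambda>x::'a\<Rightarrow>'b::topological_space. x i)"
  by (rule continuous_on_subset[OF continuous_on_product_coordinates]) simp

lemma cont_slice1: "continuous_on UNIV g \<Longrightarrow> continuous_on S (\<lambda>t. g (t, y))"
  by (rule continuous_on_compose2[of UNIV g]) (auto intro!: continuous_intros)
lemma cont_slice2: "continuous_on UNIV g \<Longrightarrow> continuous_on S (\<lambda>t. g (x, t))"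
  by (rule continuous_on_compose2[of UNIV g]) (auto intro!: continuous_intros)

definition ucomb :: "(nat \<Rightarrow> nat \<Rightarrow> real \<times> real \<Rightarrow> real) \<Rightarrow> nat \<Rightarrow> (nat \<Rightarrow> real) \<Rightarrow> nat \<Rightarrow> real \<times> real \<Rightarrow> real"
  where "ucomb \<phi> k c i = (\<lambda>x. \<Sum>j<k. c j * \<phi> j i x)"
definition Nn where "Nn m L1 L2 \<alpha> \<phi> k c = (\<Sum>i<m. robin_form_rect L1 L2 \<alpha> (ucomb \<phi> k c i))"
definition Dn where "Dn m L1 L2 \<phi> k c = (\<Sum>i<m. l2sq_rect L1 L2 (ucomb \<phi> k c i))"
definition adm where "adm m L1 L2 k \<phi> \<longleftrightarrow> (\<forall>j<k. \<forall>i<m. C1fun (\<phi> j i)) \<and>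
  (\<forall>c :: nat \<Rightarrow> real. (\<forall>i<m. \<forall>x\<in>cbox (0, 0) (L1, L2). (\<Sum>j<k. c j * \<phi> j i x) = 0) \<longrightarrow> (\<forall>j<k. c j = 0))"

lemma robin_eig_alt: "robin_eig m L1 L2 \<alpha> k =
  (INF \<phi> \<in> {\<phi>. adm m L1 L2 k \<phi>}. SUP c \<in> {c. \<exists>j<k. c j \<noteq> 0}. Nn m L1 L2 \<alpha> \<phi> k c / Dn m L1 L2 \<phi> k c)"
  unfolding robin_eig_def adm_def Nn_def Dn_def ucomb_def by simp

definition Kf where "Kf L1 L2 \<alpha> f k =
  integral (cbox (0,0) (L1,L2)) (\<lambda>p. (\<Sum>j<k. \<bar>frechet_derivative (f j) (at p) (1,0)\<bar>)^2 + (\<Sum>j<k. \<bar>frechet_derivative (f j) (at p) (0,1)\<bar>)^2)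
  + \<alpha> * (integral {0..L1} (\<lambda>t. (\<Sum>j<k. \<bar>f j (t,0)\<bar>)^2 + (\<Sum>j<k. \<bar>f j (t,L2)\<bar>)^2)
        + integral {0..L2} (\<lambda>t. (\<Sum>j<k. \<bar>f j (0,t)\<bar>)^2 + (\<Sum>j<k. \<bar>f j (L1,t)\<bar>)^2))"

lemma form_bound:
  fixes k :: nat and f :: "nat \<Rightarrow> real \<times> real \<Rightarrow> real"
  assumes f: "\<And>j. j < k \<Longrightarrow> C1fun (f j)" and al: "\<alpha> \<ge> 0" and cM: "\<And>j. j < k \<Longrightarrow> \<bar>c j\<bar> \<le> M"
  shows "robin_form_rect L1 L2 \<alpha> (\<lambda>x. \<Sum>j<k. c j * f j x) \<le> M^2 * Kf L1 L2 \<alpha> f k"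
proof -
  define u where "u = (\<lambda>x. \<Sum>j<k. c j * f j x)"
  have uC: "C1fun u" unfolding u_def by (rule C1fun_sum[OF f])
  have fc: "continuous_on UNIV (f j)" if "j \<in> {..<k}" for j using C1fun_cont f that by auto
  have fdc: "continuous_on UNIV (\<lambda>p. frechet_derivative (f j) (at p) v)" if "j \<in> {..<k}" for j v
    using C1fun_fd_cont f that by auto
  have s1: "\<And>j S y. j \<in> {..<k} \<Longrightarrow> continuous_on S (\<lambda>t. f j (t, y))" using cont_slice1 fc by blast
  have s2: "\<And>j S x. j \<in> {..<k} \<Longrightarrow> continuous_on S (\<lambda>t. f j (x, t))" using cont_slice2 fc by blast
  have fdcS: "\<And>j S v. j \<in> {..<k} \<Longrightarrow> continuous_on S (\<lambda>p. frechet_derivative (f j) (at p) v)"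
    using fdc continuous_on_subset by blast
  have uc: "continuous_on UNIV u" by (rule C1fun_cont[OF uC])
  have G: "integral (cbox (0,0) (L1,L2)) (grad_sq u) \<le>
     M^2 * integral (cbox (0,0) (L1,L2)) (\<lambda>p. (\<Sum>j<k. \<bar>frechet_derivative (f j) (at p) (1,0)\<bar>)^2 + (\<Sum>j<k. \<bar>frechet_derivative (f j) (at p) (0,1)\<bar>)^2)"
  proof -
    have "integral (cbox (0,0) (L1,L2)) (grad_sq u) \<le>
      integral (cbox (0,0) (L1,L2)) (\<lambda>p. M^2 * ((\<Sum>j<k. \<bar>frechet_derivative (f j) (at p) (1,0)\<bar>)^2 + (\<Sum>j<k. \<bar>frechet_derivative (f j) (at p) (0,1)\<bar>)^2))"
    proof (rule integral_le)
      show "grad_sq u integrable_on cbox (0,0) (L1,L2)"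
        by (rule integrable_continuous[OF continuous_on_subset[OF C1fun_grad_cont[OF uC]]]) simp
      show "(\<lambda>p. M^2 * ((\<Sum>j<k. \<bar>frechet_derivative (f j) (at p) (1,0)\<bar>)^2 + (\<Sum>j<k. \<bar>frechet_derivative (f j) (at p) (0,1)\<bar>)^2)) integrable_on cbox (0,0) (L1,L2)"
        by (intro integrable_continuous continuous_intros fdcS)
      fix p
      have "grad_sq u p = (\<Sum>j<k. c j * frechet_derivative (f j) (at p) (1,0))^2 + (\<Sum>j<k. c j * frechet_derivative (f j) (at p) (0,1))^2"
        unfolding grad_sq_def u_def using fd_sum[of k f c p, OF f] by simp
      also have "\<dots> \<le> M^2 * (\<Sum>j<k. \<bar>frechet_derivative (f j) (at p) (1,0)\<bar>)^2 + M^2 * (\<Sum>j<k. \<bar>frechet_derivative (f j) (at p) (0,1)\<bar>)^2"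
        using sq_sum_bound[of k c M "\<lambda>j. frechet_derivative (f j) (at p) (1,0)", OF cM] sq_sum_bound[of k c M "\<lambda>j. frechet_derivative (f j) (at p) (0,1)", OF cM] by (intro add_mono) simp_all
      finally show "grad_sq u p \<le> M^2 * ((\<Sum>j<k. \<bar>frechet_derivative (f j) (at p) (1,0)\<bar>)^2 + (\<Sum>j<k. \<bar>frechet_derivative (f j) (at p) (0,1)\<bar>)^2)"
        by (simp add: algebra_simps)
    qed
    then show ?thesis by simp
  qed
  have B1: "integral {0..L1} (\<lambda>t. (u (t,0))^2 + (u (t,L2))^2) \<le>
      M^2 * integral {0..L1} (\<lambda>t. (\<Sum>j<k. \<bar>f j (t,0)\<bar>)^2 + (\<Sum>j<k. \<bar>f j (t,L2)\<bar>)^2)"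
  proof -
    have "integral {0..L1} (\<lambda>t. (u (t,0))^2 + (u (t,L2))^2) \<le>
      integral {0..L1} (\<lambda>t. M^2 * ((\<Sum>j<k. \<bar>f j (t,0)\<bar>)^2 + (\<Sum>j<k. \<bar>f j (t,L2)\<bar>)^2))"
    proof (rule integral_le)
      show "(\<lambda>t. (u (t,0))^2 + (u (t,L2))^2) integrable_on {0..L1}"
        by (intro integrable_continuous_real continuous_intros cont_slice1 uc)
      show "(\<lambda>t. M^2 * ((\<Sum>j<k. \<bar>f j (t,0)\<bar>)^2 + (\<Sum>j<k. \<bar>f j (t,L2)\<bar>)^2)) integrable_on {0..L1}"
        by (intro integrable_continuous_real continuous_intros s1)
      fix t
      show "(u (t,0))^2 + (u (t,L2))^2 \<le> M^2 * ((\<Sum>j<k. \<bar>f j (t,0)\<bar>)^2 + (\<Sum>j<k. \<bar>f j (t,L2)\<bar>)^2)"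
        unfolding u_def distrib_left by (intro add_mono sq_sum_bound cM)
    qed
    then show ?thesis by simp
  qed
  have B2: "integral {0..L2} (\<lambda>t. (u (0,t))^2 + (u (L1,t))^2) \<le>
      M^2 * integral {0..L2} (\<lambda>t. (\<Sum>j<k. \<bar>f j (0,t)\<bar>)^2 + (\<Sum>j<k. \<bar>f j (L1,t)\<bar>)^2)"
  proof -
    have "integral {0..L2} (\<lambda>t. (u (0,t))^2 + (u (L1,t))^2) \<le>
      integral {0..L2} (\<lambda>t. M^2 * ((\<Sum>j<k. \<bar>f j (0,t)\<bar>)^2 + (\<Sum>j<k. \<bar>f j (L1,t)\<bar>)^2))"
    proof (rule integral_le)
      show "(\<lambda>t. (u (0,t))^2 + (u (L1,t))^2) integrable_on {0..L2}"
        by (intro integrable_continuous_real continuous_intros cont_slice2 uc)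
      show "(\<lambda>t. M^2 * ((\<Sum>j<k. \<bar>f j (0,t)\<bar>)^2 + (\<Sum>j<k. \<bar>f j (L1,t)\<bar>)^2)) integrable_on {0..L2}"
        by (intro integrable_continuous_real continuous_intros s2)
      fix t
      show "(u (0,t))^2 + (u (L1,t))^2 \<le> M^2 * ((\<Sum>j<k. \<bar>f j (0,t)\<bar>)^2 + (\<Sum>j<k. \<bar>f j (L1,t)\<bar>)^2)"
        unfolding u_def distrib_left by (intro add_mono sq_sum_bound cM)
    qed
    then show ?thesis by simp
  qed
  have "\<alpha> * (integral {0..L1} (\<lambda>t. (u (t,0))^2 + (u (t,L2))^2) + integral {0..L2} (\<lambda>t. (u (0,t))^2 + (u (L1,t))^2))
     \<le> \<alpha> * (M^2 * integral {0..L1} (\<lambda>t. (\<Sum>j<k. \<bar>f j (t,0)\<bar>)^2 + (\<Sum>j<k. \<bar>f j (t,L2)\<bar>)^2)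
             + M^2 * integral {0..L2} (\<lambda>t. (\<Sum>j<k. \<bar>f j (0,t)\<bar>)^2 + (\<Sum>j<k. \<bar>f j (L1,t)\<bar>)^2))"
    using B1 B2 al by (intro mult_left_mono add_mono) auto
  then show ?thesis using G unfolding robin_form_rect_def Kf_def u_def[symmetric]
    by (simp add: algebra_simps)
qed

lemma form_nonneg:
  assumes uC: "C1fun u" and al: "\<alpha> \<ge> 0"
  shows "robin_form_rect L1 L2 \<alpha> u \<ge> 0"
proof -
  have uc: "continuous_on UNIV u" by (rule C1fun_cont[OF uC])
  have "integral (cbox (0,0) (L1,L2)) (grad_sq u) \<ge> 0"
    by (intro integral_nonneg integrable_continuous continuous_on_subset[OF C1fun_grad_cont[OF uC]])
       (auto simp: grad_sq_def)
  moreover have "integral {0..L1} (\<lambda>t. (u (t,0))^2 + (u (t,L2))^2) \<ge> 0"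
    by (intro integral_nonneg integrable_continuous_real continuous_intros cont_slice1 uc) auto
  moreover have "integral {0..L2} (\<lambda>t. (u (0,t))^2 + (u (L1,t))^2) \<ge> 0"
    by (intro integral_nonneg integrable_continuous_real continuous_intros cont_slice2 uc) auto
  ultimately show ?thesis unfolding robin_form_rect_def using al by simp
qed

lemma l2_nonneg:
  assumes "continuous_on UNIV u"
  shows "l2sq_rect L1 L2 u \<ge> 0"
  unfolding l2sq_rect_def
  by (intro integral_nonneg integrable_continuous continuous_intros continuous_on_subset[OF assms]) auto

lemma l2_pos:
  assumes uc: "continuous_on UNIV u" and L: "L1 > 0" "L2 > 0" and x: "x \<in> cbox (0,0) (L1,L2)" and ux: "u x \<noteq> 0"
  shows "l2sq_rect L1 L2 u > 0"
proof -
  have "l2sq_rect L1 L2 u \<noteq> 0"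
  proof
    assume z: "l2sq_rect L1 L2 u = 0"
    have int: "(\<lambda>x. (u x)^2) integrable_on cbox (0,0) (L1,L2)"
      by (intro integrable_continuous continuous_intros continuous_on_subset[OF uc]) auto
    have "((\<lambda>x. (u x)^2) has_integral 0) (cbox (0,0) (L1,L2))"
      using z int unfolding l2sq_rect_def by (metis has_integral_integral)
    moreover have "box (0::real,0::real) (L1,L2) \<noteq> {}" using L by (auto simp: box_ne_empty inner_Pair Basis_prod_def)
    ultimately have "(u x)^2 = 0"
      by (intro has_integral_0_cbox_imp_0[OF _ _ _ _ x]) (auto intro!: continuous_intros continuous_on_subset[OF uc])
    then show False using ux by simp
  qed
  then show ?thesis using l2_nonneg[OF uc, of L1 L2] by linarith
qed



lemma l2_expand:
  fixes k :: nat and f :: "nat \<Rightarrow> real \<times> real \<Rightarrow> real"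
  assumes fc: "\<And>j. j < k \<Longrightarrow> continuous_on UNIV (f j)"
  shows "l2sq_rect L1 L2 (\<lambda>x. \<Sum>j<k. c j * f j x)
       = (\<Sum>j<k. \<Sum>l<k. c j * c l * integral (cbox (0,0) (L1,L2)) (\<lambda>x. f j x * f l x))"
proof -
  have fcS: "continuous_on S (f j)" if "j \<in> {..<k}" for j S using fc that continuous_on_subset by blast
  have pw: "(\<Sum>j<k. c j * f j x)^2 = (\<Sum>j<k. \<Sum>l<k. c j * c l * (f j x * f l x))" for x
    by (simp add: power2_eq_square sum_product algebra_simps)
  have "l2sq_rect L1 L2 (\<lambda>x. \<Sum>j<k. c j * f j x) = integral (cbox (0,0) (L1,L2)) (\<lambda>x. \<Sum>j<k. \<Sum>l<k. c j * c l * (f j x * f l x))"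
    unfolding l2sq_rect_def pw ..
  also have "\<dots> = (\<Sum>j<k. integral (cbox (0,0) (L1,L2)) (\<lambda>x. \<Sum>l<k. c j * c l * (f j x * f l x)))"
    by (intro integral_sum integrable_continuous continuous_intros fcS) auto
  also have "\<dots> = (\<Sum>j<k. \<Sum>l<k. integral (cbox (0,0) (L1,L2)) (\<lambda>x. c j * c l * (f j x * f l x)))"
    by (intro sum.cong refl integral_sum integrable_continuous continuous_intros fcS) auto
  also have "\<dots> = (\<Sum>j<k. \<Sum>l<k. c j * c l * integral (cbox (0,0) (L1,L2)) (\<lambda>x. f j x * f l x))"
    by simp
  finally show ?thesis .
qed

lemma adm_C1: "adm m L1 L2 k \<phi> \<Longrightarrow> j < k \<Longrightarrow> i < m \<Longrightarrow> C1fun (\<phi> j i)"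
  unfolding adm_def by blast

lemma ucomb_C1: "adm m L1 L2 k \<phi> \<Longrightarrow> i < m \<Longrightarrow> C1fun (ucomb \<phi> k c i)"
  unfolding ucomb_def by (intro C1fun_sum adm_C1) auto

lemma Dn_cont:
  assumes a: "adm m L1 L2 k \<phi>"
  shows "continuous_on S (Dn m L1 L2 \<phi> k)"
proof -
  have "Dn m L1 L2 \<phi> k = (\<lambda>c. \<Sum>i<m. \<Sum>j<k. \<Sum>l<k. c j * c l * integral (cbox (0,0) (L1,L2)) (\<lambda>x. \<phi> j i x * \<phi> l i x))"
  proof
    fix c
    show "Dn m L1 L2 \<phi> k c = (\<Sum>i<m. \<Sum>j<k. \<Sum>l<k. c j * c l * integral (cbox (0,0) (L1,L2)) (\<lambda>x. \<phi> j i x * \<phi> l i x))"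
      unfolding Dn_def ucomb_def
      by (intro sum.cong refl l2_expand C1fun_cont adm_C1[OF a]) auto
  qed
  then show ?thesis by (simp add: continuous_intros)
qed

lemma Dn_pos:
  assumes a: "adm m L1 L2 k \<phi>" and L: "L1 > 0" "L2 > 0" and c: "\<exists>j<k. c j \<noteq> 0"
  shows "Dn m L1 L2 \<phi> k c > 0"
proof -
  have "\<not> (\<forall>i<m. \<forall>x\<in>cbox (0, 0) (L1, L2). (\<Sum>j<k. c j * \<phi> j i x) = 0)"
    using a c unfolding adm_def by blast
  then obtain i x where i: "i < m" and x: "x \<in> cbox (0,0) (L1,L2)" and nz: "ucomb \<phi> k c i x \<noteq> 0"
    unfolding ucomb_def by blast
  have "l2sq_rect L1 L2 (ucomb \<phi> k c i) > 0"
    by (rule l2_pos[OF C1fun_cont[OF ucomb_C1[OF a i]] L x nz])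
  then show ?thesis unfolding Dn_def
    by (intro sum_pos2[of _ i]) (auto intro!: l2_nonneg C1fun_cont ucomb_C1[OF a] simp: i)
qed

lemma Dn_lower:
  assumes a: "adm m L1 L2 k \<phi>" and L: "L1 > 0" "L2 > 0" and k: "k > 0"
  shows "\<exists>\<delta>>0. \<forall>c. (\<forall>j<k. \<bar>c j\<bar> \<le> 1) \<and> (\<exists>j<k. \<bar>c j\<bar> = 1) \<longrightarrow> \<delta> \<le> Dn m L1 L2 \<phi> k c"
proof -
  define S where "S j = (if j < k then {-1..1} else {0::real})" for j
  define T where "T = PiE UNIV S \<inter> (\<Union>j<k. {c. \<bar>c j\<bar> = 1})"
  have cP: "compact (PiE UNIV S)"
  proof -
    have "compactin (product_topology (\<lambda>i. euclidean) UNIV) (PiE UNIV S)"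
      by (subst compactin_PiE) (auto simp: S_def)
    then show ?thesis by (simp add: euclidean_product_topology)
  qed
  have cl: "closed (\<Union>j<k. {c::nat\<Rightarrow>real. \<bar>c j\<bar> = 1})"
  proof -
    have "closed {c::nat\<Rightarrow>real. \<bar>c j\<bar> = 1}" for j
    proof -
      have "continuous_on UNIV (\<lambda>c::nat\<Rightarrow>real. \<bar>c j\<bar>)" by (intro continuous_intros)
      from closed_Collect_eq[OF this continuous_on_const[of UNIV 1]] show ?thesis by simp
    qed
    then show ?thesis by (intro closed_UN) auto
  qed
  have cT: "compact T" unfolding T_def using cP cl by (rule compact_Int_closed)
  have neT: "(\<lambda>j. if j = 0 then 1 else 0) \<in> T" using k by (auto simp: T_def S_def PiE_iff)
  then have "T \<noteq> {}" by blast
  from continuous_attains_inf[OF cT this Dn_cont[OF a]]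
  obtain c0 where c0: "c0 \<in> T" and min: "\<And>y. y \<in> T \<Longrightarrow> Dn m L1 L2 \<phi> k c0 \<le> Dn m L1 L2 \<phi> k y" by blast
  have "\<exists>j<k. c0 j \<noteq> 0" using c0 by (auto simp: T_def)
  then have pos: "Dn m L1 L2 \<phi> k c0 > 0" by (rule Dn_pos[OF a L])
  show ?thesis
  proof (intro exI[of _ "Dn m L1 L2 \<phi> k c0"] conjI allI impI pos)
    fix c :: "nat \<Rightarrow> real" assume h: "(\<forall>j<k. \<bar>c j\<bar> \<le> 1) \<and> (\<exists>j<k. \<bar>c j\<bar> = 1)"
    define c' where "c' j = (if j < k then c j else 0)" for j
    have "c' \<in> T" using h by (auto simp: T_def S_def PiE_iff c'_def)
    moreover have "Dn m L1 L2 \<phi> k c' = Dn m L1 L2 \<phi> k c"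
      unfolding Dn_def ucomb_def c'_def by simp
    ultimately show "Dn m L1 L2 \<phi> k c0 \<le> Dn m L1 L2 \<phi> k c" using min by metis
  qed
qed

lemma Nn_nonneg:
  assumes a: "adm m L1 L2 k \<phi>" and al: "\<alpha> \<ge> 0"
  shows "Nn m L1 L2 \<alpha> \<phi> k c \<ge> 0"
  unfolding Nn_def by (intro sum_nonneg form_nonneg ucomb_C1[OF a] al) auto

lemma Dn_nonneg:
  assumes a: "adm m L1 L2 k \<phi>"
  shows "Dn m L1 L2 \<phi> k c \<ge> 0"
  unfolding Dn_def by (intro sum_nonneg l2_nonneg C1fun_cont ucomb_C1[OF a]) auto

lemma Dn_scale:
  assumes "M \<noteq> 0"
  shows "Dn m L1 L2 \<phi> k (\<lambda>j. c j / M) = Dn m L1 L2 \<phi> k c / M^2"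
proof -
  have "(ucomb \<phi> k (\<lambda>j. c j / M) i x)^2 = (ucomb \<phi> k c i x)^2 / M^2" for i x
    unfolding ucomb_def by (simp add: sum_divide_distrib[symmetric] power_divide)
  then show ?thesis unfolding Dn_def l2sq_rect_def by (simp add: sum_divide_distrib)
qed

lemma RQ_bdd:
  assumes a: "adm m L1 L2 k \<phi>" and L: "L1 > 0" "L2 > 0" and al: "\<alpha> \<ge> 0"
  shows "bdd_above ((\<lambda>c. Nn m L1 L2 \<alpha> \<phi> k c / Dn m L1 L2 \<phi> k c) ` {c. \<exists>j<k. c j \<noteq> 0})"
proof (cases "k = 0")
  case True then show ?thesis by simp
next
  case False
  then have k: "k > 0" by simp
  obtain \<delta> where dp: "\<delta> > 0" and dl: "\<And>c. (\<forall>j<k. \<bar>c j\<bar> \<le> 1) \<and> (\<exists>j<k. \<bar>c j\<bar> = 1) \<Longrightarrow> \<delta> \<le> Dn m L1 L2 \<phi> k c"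
    using Dn_lower[OF a L k] by blast
  define K where "K = (\<Sum>i<m. \<bar>Kf L1 L2 \<alpha> (\<lambda>j. \<phi> j i) k\<bar>)"
  show ?thesis
  proof (rule bdd_aboveI2)
    fix c :: "nat \<Rightarrow> real" assume "c \<in> {c. \<exists>j<k. c j \<noteq> 0}"
    then obtain j1 where j1: "j1 < k" "c j1 \<noteq> 0" by auto
    define M where "M = Max ((\<lambda>j. \<bar>c j\<bar>) ` {..<k})"
    have cM: "\<bar>c j\<bar> \<le> M" if "j < k" for j unfolding M_def using that by (intro Max_ge) auto
    have Mp: "M > 0" using cM[OF j1(1)] j1(2) by simp
    obtain j0 where j0: "j0 < k" "\<bar>c j0\<bar> = M"
    proof -
      have "M \<in> (\<lambda>j. \<bar>c j\<bar>) ` {..<k}" unfolding M_def using k by (intro Max_in) auto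
      then show ?thesis using that by auto
    qed
    have N: "Nn m L1 L2 \<alpha> \<phi> k c \<le> M^2 * K"
    proof -
      have "Nn m L1 L2 \<alpha> \<phi> k c \<le> (\<Sum>i<m. M^2 * \<bar>Kf L1 L2 \<alpha> (\<lambda>j. \<phi> j i) k\<bar>)"
        unfolding Nn_def ucomb_def
      proof (intro sum_mono)
        fix i assume i: "i \<in> {..<m}"
        have "robin_form_rect L1 L2 \<alpha> (\<lambda>x. \<Sum>j<k. c j * \<phi> j i x) \<le> M^2 * Kf L1 L2 \<alpha> (\<lambda>j. \<phi> j i) k"
          using form_bound[of k "\<lambda>j. \<phi> j i" \<alpha> c M L1 L2] adm_C1[OF a] i al cM by auto
        also have "\<dots> \<le> M^2 * \<bar>Kf L1 L2 \<alpha> (\<lambda>j. \<phi> j i) k\<bar>" by (intro mult_left_mono) auto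
        finally show "robin_form_rect L1 L2 \<alpha> (\<lambda>x. \<Sum>j<k. c j * \<phi> j i x) \<le> M^2 * \<bar>Kf L1 L2 \<alpha> (\<lambda>j. \<phi> j i) k\<bar>" .
      qed
      then show ?thesis by (simp add: K_def sum_distrib_left)
    qed
    have D: "M^2 * \<delta> \<le> Dn m L1 L2 \<phi> k c"
    proof -
      have "\<delta> \<le> Dn m L1 L2 \<phi> k (\<lambda>j. c j / M)"
        using Mp cM j0 by (intro dl) (auto simp: abs_divide)
      also have "\<dots> = Dn m L1 L2 \<phi> k c / M^2" using Mp by (simp add: Dn_scale)
      finally show ?thesis using Mp by (simp add: field_simps)
    qed
    have "Nn m L1 L2 \<alpha> \<phi> k c / Dn m L1 L2 \<phi> k c \<le> (M^2 * K) / (M^2 * \<delta>)"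
      using N D Nn_nonneg[OF a al] Mp dp by (intro frac_le) (auto simp: K_def intro!: sum_nonneg)
    also have "\<dots> = K / \<delta>" using Mp by simp
    finally show "Nn m L1 L2 \<alpha> \<phi> k c / Dn m L1 L2 \<phi> k c \<le> K / \<delta>" .
  qed
qed



lemma C1fun_const: "C1fun (\<lambda>x. a)"
  unfolding C1fun_def
  by (intro exI[of _ "\<lambda>x. 0"]) (auto intro!: continuous_intros derivative_eq_intros)

lemma C1fun_fst:
  assumes gd: "\<And>t. (g has_real_derivative g' t) (at t)" and gc: "continuous_on UNIV g'"
  shows "C1fun (\<lambda>x. g (fst x))"
  unfolding C1fun_def
proof (intro exI[of _ "\<lambda>x. g' (fst x) *\<^sub>R fst_blinfun"] conjI allI)
  show "continuous_on UNIV (\<lambda>x::real\<times>real. g' (fst x) *\<^sub>R fst_blinfun)"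
    by (intro continuous_intros continuous_on_compose2[OF gc]) auto
  fix x :: "real \<times> real"
  have d: "((\<lambda>x. g (fst x)) has_derivative (\<lambda>h. g' (fst x) * fst h)) (at x)"
    using has_derivative_compose[OF has_derivative_fst[OF has_derivative_ident] gd[unfolded has_field_derivative_def]]
    by (simp add: mult.commute)
  have e: "blinfun_apply (g' (fst x) *\<^sub>R fst_blinfun) = (\<lambda>h. g' (fst x) * fst h)"
    by (auto simp: fun_eq_iff blinfun.scaleR_left)
  show "((\<lambda>x. g (fst x)) has_derivative blinfun_apply (g' (fst x) *\<^sub>R fst_blinfun)) (at x)"
    unfolding e by (rule d)
qed

lemma C1fun_pow: "C1fun (\<lambda>x. (fst x)^j)"
proof (rule C1fun_fst)
  show "((\<lambda>t. t^j) has_real_derivative (of_nat j * t^(j-1))) (at t)" for t :: real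
    using DERIV_pow[of j t UNIV] by simp
  show "continuous_on UNIV (\<lambda>t::real. of_nat j * t^(j-1))" by (intro continuous_intros)
qed

lemma rect_adm_nonempty:
  assumes L1: "L1 > 0" and L2: "L2 \<ge> 0"
  shows "adm (1::nat) L1 L2 k (\<lambda>j i x. (fst x)^j)"
  unfolding adm_def
proof (intro conjI allI impI)
  fix j i show "C1fun (\<lambda>x. (fst x)^j)" by (rule C1fun_pow)
next
  fix c :: "nat \<Rightarrow> real" and j
  assume h: "\<forall>i::nat<1. \<forall>x\<in>cbox (0, 0) (L1, L2). (\<Sum>j<k. c j * fst x ^ j) = 0" and j: "j < k"
  show "c j = 0"
  proof (rule ccontr)
    assume cj: "c j \<noteq> 0"
    define n where "n = k - 1"
    have kn: "{..<k} = {..n}" using j by (auto simp: n_def)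
    have "finite {x. (\<Sum>i\<le>n. c i * x^i) = 0}"
      by (subst polyfun_finite_roots) (use j cj in \<open>auto simp: n_def intro!: exI[of _ j]\<close>)
    moreover have "{0..L1} \<subseteq> {x. (\<Sum>i\<le>n. c i * x^i) = 0}"
    proof
      fix t assume t: "t \<in> {0..L1}"
      have "(t, 0) \<in> cbox (0,0) (L1, L2)"
        using t L2 by (auto simp: cbox_Pair_iff)
      moreover have h0: "\<forall>x\<in>cbox (0, 0) (L1, L2). (\<Sum>j<k. c j * fst x ^ j) = 0" using h by simp
      ultimately have "(\<Sum>j<k. c j * fst (t,0::real) ^ j) = 0" by blast
      then show "t \<in> {x. (\<Sum>i\<le>n. c i * x^i) = 0}"
        using kn by simp
    qed
    ultimately have "finite {0..L1}" by (rule finite_subset[rotated])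
    then show False using L1 infinite_Icc[of 0 L1] by blast
  qed
qed



lemma form_ge_grad:
  assumes uC: "C1fun u" and al: "\<alpha> \<ge> 0"
  shows "integral (cbox (0,0) (L1,L2)) (grad_sq u) \<le> robin_form_rect L1 L2 \<alpha> u"
proof -
  have uc: "continuous_on UNIV u" by (rule C1fun_cont[OF uC])
  have "integral {0..L1} (\<lambda>t. (u (t,0))^2 + (u (t,L2))^2) \<ge> 0"
    by (intro integral_nonneg integrable_continuous_real continuous_intros cont_slice1 uc) auto
  moreover have "integral {0..L2} (\<lambda>t. (u (0,t))^2 + (u (L1,t))^2) \<ge> 0"
    by (intro integral_nonneg integrable_continuous_real continuous_intros cont_slice2 uc) auto
  ultimately show ?thesis unfolding robin_form_rect_def using al by simp
qed

lemma grad_const: "grad_sq (\<lambda>x. a) p = 0"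
proof -
  have "frechet_derivative (\<lambda>x::real\<times>real. a) (at p) = (\<lambda>h. 0)"
    by (rule frechet_derivative_at[symmetric]) (rule has_derivative_const)
  then show ?thesis by (simp add: grad_sq_def)
qed

lemma robin_const:
  assumes "L1 \<ge> 0" "L2 \<ge> 0"
  shows "robin_form_rect L1 L2 \<alpha> (\<lambda>x. a) = \<alpha> * (2 * L1 * a^2 + 2 * L2 * a^2)"
proof -
  have "grad_sq (\<lambda>x. a) = (\<lambda>p. 0)" by (rule ext) (rule grad_const)
  then show ?thesis using assms by (simp add: robin_form_rect_def algebra_simps)
qed

lemma l2_const:
  assumes "L1 \<ge> 0" "L2 \<ge> 0"
  shows "l2sq_rect L1 L2 (\<lambda>x. a) = L1 * L2 * a^2"
  using assms by (simp add: l2sq_rect_def content_Pair)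

lemma SUP_nonneg:
  assumes a: "adm m L1 L2 k \<phi>" and L: "L1 > 0" "L2 > 0" and al: "\<alpha> \<ge> 0" and k: "k > 0"
  shows "0 \<le> (SUP c \<in> {c. \<exists>j<k. c j \<noteq> 0}. Nn m L1 L2 \<alpha> \<phi> k c / Dn m L1 L2 \<phi> k c)"
proof (rule cSUP_upper2[OF RQ_bdd[OF a L al]])
  show "(\<lambda>j. 1) \<in> {c. \<exists>j<k. c j \<noteq> (0::real)}" using k by auto
  show "0 \<le> Nn m L1 L2 \<alpha> \<phi> k (\<lambda>j. 1) / Dn m L1 L2 \<phi> k (\<lambda>j. 1)"
    using Nn_nonneg[OF a al] Dn_nonneg[OF a] by simp
qed

lemma sq_eig_upper:
  fixes n :: nat
  assumes n: "n > 0" and s: "s > 0" and al: "\<alpha> \<ge> 0"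
  shows "robin_eig n s s \<alpha> n \<le> 4 * \<alpha> / s"
proof -
  define \<phi>0 :: "nat \<Rightarrow> nat \<Rightarrow> real \<times> real \<Rightarrow> real" where "\<phi>0 j i = (\<lambda>x. if i = j then 1 else 0)" for j i
  have adm0: "adm n s s n \<phi>0"
    unfolding adm_def
  proof (intro conjI allI impI)
    fix j i show "C1fun (\<phi>0 j i)" unfolding \<phi>0_def by (rule C1fun_const)
  next
    fix c :: "nat \<Rightarrow> real" and j
    assume h: "\<forall>i<n. \<forall>x\<in>cbox (0, 0) (s, s). (\<Sum>j<n. c j * \<phi>0 j i x) = 0" and j: "j < n"
    have "(0,0) \<in> cbox (0,0) (s,s)" using s by (auto simp: cbox_Pair_iff)
    then have "(\<Sum>l<n. c l * \<phi>0 l j (0,0)) = 0" using h j by blast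
    moreover have "(\<Sum>l<n. c l * \<phi>0 l j (0,0)) = c j"
      using j by (simp add: \<phi>0_def if_distrib cong: if_cong)
    ultimately show "c j = 0" by simp
  qed
  have uc: "ucomb \<phi>0 n c i = (\<lambda>x. c i)" if "i < n" for c i
    using that by (simp add: ucomb_def \<phi>0_def if_distrib cong: if_cong)
  have val: "Nn n s s \<alpha> \<phi>0 n c / Dn n s s \<phi>0 n c = 4 * \<alpha> / s" if c: "c \<in> {c. \<exists>j<n. c j \<noteq> 0}" for c
  proof -
    have N: "Nn n s s \<alpha> \<phi>0 n c = 4 * \<alpha> * s * (\<Sum>i<n. (c i)^2)"
      unfolding Nn_def using s by (simp add: uc robin_const sum_distrib_left algebra_simps)
    have D: "Dn n s s \<phi>0 n c = s * s * (\<Sum>i<n. (c i)^2)"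
      unfolding Dn_def using s by (simp add: uc l2_const sum_distrib_left algebra_simps)
    have pos: "(\<Sum>i<n. (c i)^2) > 0"
    proof -
      obtain j where "j < n" "c j \<noteq> 0" using c by auto
      then show ?thesis by (intro sum_pos2[of _ j]) auto
    qed
    show ?thesis using pos s by (simp add: N D field_simps)
  qed
  have "robin_eig n s s \<alpha> n \<le> (SUP c \<in> {c. \<exists>j<n. c j \<noteq> 0}. Nn n s s \<alpha> \<phi>0 n c / Dn n s s \<phi>0 n c)"
    unfolding robin_eig_alt
  proof (rule cINF_lower)
    show "bdd_below ((\<lambda>\<phi>. SUP c \<in> {c. \<exists>j<n. c j \<noteq> 0}. Nn n s s \<alpha> \<phi> n c / Dn n s s \<phi> n c) ` {\<phi>. adm n s s n \<phi>})"
      by (rule bdd_belowI2[of _ 0]) (use SUP_nonneg s al n in auto)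
    show "\<phi>0 \<in> {\<phi>. adm n s s n \<phi>}" using adm0 by simp
  qed
  also have "\<dots> = (SUP c \<in> {c::nat\<Rightarrow>real. \<exists>j<n. c j \<noteq> 0}. 4 * \<alpha> / s)"
    by (rule arg_cong[where f=Sup], rule image_cong) (auto simp: val)
  also have "\<dots> = 4 * \<alpha> / s"
  proof (rule cSUP_const)
    show "{c::nat\<Rightarrow>real. \<exists>j<n. c j \<noteq> 0} \<noteq> {}" using n by (auto intro!: exI[of _ "\<lambda>j. 1"])
  qed
  finally show ?thesis .
qed



lemma rect_eig_lower:
  fixes P Q k :: nat
  assumes L1: "L1 > 0" and L2: "L2 > 0" and al: "\<alpha> \<ge> 0" and P: "P > 0" and Q: "Q > 0"
    and PQ: "P * Q < k"
    and mu1: "\<mu> \<le> (pi/(L1/P))^2" and mu2: "\<mu> \<le> (pi/(L2/Q))^2"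
  shows "\<mu> \<le> robin_eig 1 L1 L2 \<alpha> k"
  unfolding robin_eig_alt
proof (rule cINF_greatest)
  show "{\<phi>. adm (1::nat) L1 L2 k \<phi>} \<noteq> {}" using rect_adm_nonempty[OF L1, of L2 k] L2 by auto
  fix \<phi> assume "\<phi> \<in> {\<phi>. adm (1::nat) L1 L2 k \<phi>}"
  then have a: "adm (1::nat) L1 L2 k \<phi>" by simp
  define cell where "cell p q = cbox (real p * (L1/P), real q * (L2/Q)) (real (Suc p) * (L1/P), real (Suc q) * (L2/Q))" for p q :: nat
  define A where "A r j = integral (cell (r div Q) (r mod Q)) (\<phi> j 0)" for r j
  obtain c where cnz: "\<exists>j\<in>{..<k}. c j \<noteq> 0" and csol: "\<forall>r<P*Q. (\<Sum>j\<in>{..<k}. A r j * c j) = 0"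
    using lin_solve[of "{..<k}" "P*Q" A] PQ by auto
  define u where "u = ucomb \<phi> k c 0"
  have uC: "C1fun u" unfolding u_def by (rule ucomb_C1[OF a]) simp
  have phic: "continuous_on S (\<phi> j 0)" if "j \<in> {..<k}" for j S
    using continuous_on_subset[OF C1fun_cont[OF adm_C1[OF a]]] that by auto
  have zero: "integral (cell p q) u = 0" if p: "p < P" and q: "q < Q" for p q
  proof -
    define r where "r = p * Q + q"
    have rdiv: "r div Q = p" and rmod: "r mod Q = q" using q by (auto simp: r_def)
    have r: "r < P * Q"
    proof -
      have "r < p * Q + Q" using q by (simp add: r_def)
      also have "\<dots> = Suc p * Q" by simp
      also have "\<dots> \<le> P * Q" using p by (intro mult_right_mono) auto
      finally show ?thesis .
    qed
    have "integral (cell p q) u = (\<Sum>j<k. integral (cell p q) (\<lambda>x. c j * \<phi> j 0 x))"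
      unfolding u_def ucomb_def cell_def
      by (intro integral_sum integrable_continuous continuous_intros phic) auto
    also have "\<dots> = (\<Sum>j<k. A r j * c j)" by (simp add: A_def rdiv rmod mult.commute)
    also have "\<dots> = 0" using csol r by simp
    finally show ?thesis .
  qed
  have "\<mu> * integral (cbox (0,0) (L1,L2)) (\<lambda>x. (u x)^2) \<le> integral (cbox (0,0) (L1,L2)) (grad_sq u)"
    by (rule rect_lower[OF uC L1 L2 P Q mu1 mu2]) (use zero in \<open>auto simp: cell_def\<close>)
  also have "\<dots> \<le> robin_form_rect L1 L2 \<alpha> u" by (rule form_ge_grad[OF uC al])
  finally have ineq: "\<mu> * Dn (1::nat) L1 L2 \<phi> k c \<le> Nn (1::nat) L1 L2 \<alpha> \<phi> k c"
    by (simp add: Dn_def Nn_def u_def l2sq_rect_def)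
  have cnz': "\<exists>j<k. c j \<noteq> 0" using cnz by auto
  have Dp: "Dn (1::nat) L1 L2 \<phi> k c > 0" by (rule Dn_pos[OF a L1 L2 cnz'])
  show "\<mu> \<le> (SUP c \<in> {c. \<exists>j<k. c j \<noteq> 0}. Nn (1::nat) L1 L2 \<alpha> \<phi> k c / Dn (1::nat) L1 L2 \<phi> k c)"
  proof (rule cSUP_upper2[OF RQ_bdd[OF a L1 L2 al]])
    show "c \<in> {c. \<exists>j<k. c j \<noteq> 0}" using cnz' by simp
    show "\<mu> \<le> Nn (1::nat) L1 L2 \<alpha> \<phi> k c / Dn (1::nat) L1 L2 \<phi> k c"
      using ineq Dp by (simp add: pos_le_divide_eq)
  qed
qed



lemma powr_quarter: "x \<ge> 0 \<Longrightarrow> x powr (1/4) = sqrt (sqrt x)"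
proof -
  assume x: "x \<ge> 0"
  have "x powr (1/4) = (x powr (1/2)) powr (1/2)" by (simp add: powr_powr)
  also have "\<dots> = sqrt (sqrt x)" using x by (simp add: powr_half_sqrt)
  finally show ?thesis .
qed

lemma arith_main:
  fixes \<sigma> \<kappa> \<beta> a :: real
  assumes sp: "\<sigma> > 0" and kp: "\<kappa> > 0" and bp: "\<beta> > 0" and a1: "1 \<le> a" and a2: "a \<le> \<kappa>^2"
    and cond: "4 * \<sigma>^2 * \<kappa>^2 * \<beta>^2 / pi^2 + 2 * \<sigma> * \<kappa> * \<beta> / pi * (\<kappa>^2 + 1/\<kappa>^2) + 1 \<le> \<kappa>^4"
  shows "(2*\<sigma>*\<beta>*\<kappa>*a/pi + 1) * (2*\<sigma>*\<beta>*\<kappa>/(a*pi) + 1) \<le> \<kappa>^4"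
proof -
  define X where "X = 2*\<sigma>*\<beta>*\<kappa>/pi"
  have Xp: "X > 0" using sp kp bp by (simp add: X_def)
  have ap: "a > 0" using a1 by simp
  have e1: "(2*\<sigma>*\<beta>*\<kappa>*a/pi + 1) * (2*\<sigma>*\<beta>*\<kappa>/(a*pi) + 1) = X^2 + X * (a + 1/a) + 1"
    using ap by (simp add: X_def field_simps power2_eq_square)
  have e2: "4 * \<sigma>^2 * \<kappa>^2 * \<beta>^2 / pi^2 + 2 * \<sigma> * \<kappa> * \<beta> / pi * (\<kappa>^2 + 1/\<kappa>^2) + 1
     = X^2 + X * (\<kappa>^2 + 1/\<kappa>^2) + 1"
    by (simp add: X_def field_simps power2_eq_square)
  have aa: "a + 1/a \<le> \<kappa>^2 + 1/\<kappa>^2"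
  proof -
    have k2: "\<kappa>^2 > 0" using kp by simp
    have "(\<kappa>^2 + 1/\<kappa>^2) - (a + 1/a) = (\<kappa>^2 - a) * (1 - 1/(a*\<kappa>^2))"
      using ap k2 by (simp add: field_simps)
    moreover have "1/(a*\<kappa>^2) \<le> 1"
    proof -
      have k1: "1 \<le> \<kappa>^2" using a1 a2 by simp
      have "1 * 1 \<le> a * \<kappa>^2" using a1 k1 by (intro mult_mono) auto
      then have "1 \<le> a * \<kappa>^2" by simp
      then show ?thesis using ap k2 by (simp add: field_simps)
    qed
    ultimately have "(\<kappa>^2 + 1/\<kappa>^2) - (a + 1/a) \<ge> 0" using a2 by simp
    then show ?thesis by simp
  qed
  have "X^2 + X * (a + 1/a) + 1 \<le> X^2 + X * (\<kappa>^2 + 1/\<kappa>^2) + 1"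
    using aa Xp by (simp add: mult_left_mono)
  then show ?thesis using e1 e2 cond by simp
qed

lemma ceil_nat_bounds:
  fixes R :: real
  assumes "R > 0"
  shows "R \<le> real (nat \<lceil>R\<rceil>)" "real (nat \<lceil>R\<rceil>) < R + 1" "nat \<lceil>R\<rceil> > 0"
proof -
  have c: "0 < \<lceil>R\<rceil>" using assms by simp
  then have e: "real (nat \<lceil>R\<rceil>) = of_int \<lceil>R\<rceil>" by simp
  show "R \<le> real (nat \<lceil>R\<rceil>)" using e by simp
  show "real (nat \<lceil>R\<rceil>) < R + 1" using e ceiling_correct[of R] by simp
  show "nat \<lceil>R\<rceil> > 0" using c by simp
qed

theorem lemma7p3:
  fixes A \<alpha> a :: real and k :: nat
  assumes "A > 0" and "\<alpha> > 0" and "k \<ge> 3"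
    and "4 * A powr (1/2) * real k powr (1/2) * \<alpha> / pi\<^sup>2
         + 2 * A powr (1/4) * real k powr (1/4) * \<alpha> powr (1/2) / pi
             * (real k powr (1/2) + real k powr (-1/2)) + 1 \<le> real k"
    and "1 \<le> a" and "a \<le> real k powr (1/2)"
  shows "robin_eig_rect A a \<alpha> k \<ge> robin_eig_squares A k \<alpha> k"
proof -
  note Ap = assms(1) and alp = assms(2) and k3 = assms(3) and cond0 = assms(4) and a1 = assms(5) and a2' = assms(6)
  define \<sigma> where "\<sigma> = sqrt (sqrt A)"
  define \<kappa> where "\<kappa> = sqrt (sqrt (real k))"
  define \<beta> where "\<beta> = sqrt \<alpha>"
  have kpos: "real k > 0" using k3 by simp
  have sp: "\<sigma> > 0" using Ap by (simp add: \<sigma>_def)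
  have kp: "\<kappa> > 0" using kpos by (simp add: \<kappa>_def)
  have bp: "\<beta> > 0" using alp by (simp add: \<beta>_def)
  have sA: "sqrt A = \<sigma>^2" using Ap by (simp add: \<sigma>_def)
  have sk: "sqrt (real k) = \<kappa>^2" using kpos by (simp add: \<kappa>_def)
  have kk: "real k = \<kappa>^4"
  proof -
    have "\<kappa>^4 = (\<kappa>^2)^2" by simp
    also have "\<dots> = real k" using sk[symmetric] kpos by simp
    finally show ?thesis by simp
  qed
  have ab: "\<alpha> = \<beta>^2" using alp by (simp add: \<beta>_def)
  have p1: "A powr (1/2) = \<sigma>^2" using Ap sA by (simp add: powr_half_sqrt)
  have p2: "real k powr (1/2) = \<kappa>^2" using sk by (simp add: powr_half_sqrt)
  have p3: "A powr (1/4) = \<sigma>" using Ap by (simp add: powr_quarter \<sigma>_def)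
  have p4: "real k powr (1/4) = \<kappa>" by (simp add: powr_quarter \<kappa>_def)
  have p5: "\<alpha> powr (1/2) = \<beta>" using alp by (simp add: powr_half_sqrt \<beta>_def)
  have p6: "real k powr (-1/2) = 1/\<kappa>^2"
  proof -
    have "real k powr (-1/2) = real k powr (-(1/2))" by simp
    also have "\<dots> = 1 / real k powr (1/2)" by (rule powr_minus_divide)
    finally show ?thesis using p2 by simp
  qed
  have cond: "4 * \<sigma>^2 * \<kappa>^2 * \<beta>^2 / pi^2 + 2 * \<sigma> * \<kappa> * \<beta> / pi * (\<kappa>^2 + 1/\<kappa>^2) + 1 \<le> \<kappa>^4"
  proof -
    have c1: "4 * \<sigma>^2 * \<kappa>^2 * \<alpha> / pi^2 + 2 * \<sigma> * \<kappa> * \<beta> / pi * (\<kappa>^2 + 1/\<kappa>^2) + 1 \<le> real k"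
      using cond0 by (simp only: p1 p2 p3 p4 p5 p6)
    show ?thesis using c1 unfolding ab kk .
  qed
  have a2: "a \<le> \<kappa>^2" using a2' p2 by simp
  have apos: "a > 0" using a1 by simp
  define s where "s = sqrt (A / real k)"
  have s_eq: "s = \<sigma>^2 / \<kappa>^2" unfolding s_def real_sqrt_divide sA sk ..
  have s_pos: "s > 0" using sp kp s_eq by simp
  define \<mu> where "\<mu> = 4 * \<alpha> / s"
  have mu_eq: "\<mu> = (2 * \<beta> * \<kappa> / \<sigma>)^2"
    using sp kp unfolding \<mu>_def s_eq ab by (simp add: field_simps power2_eq_square)
  define L1 where "L1 = sqrt A * a"
  define L2 where "L2 = sqrt A / a"
  have L1p: "L1 > 0" and L2p: "L2 > 0" using Ap apos by (auto simp: L1_def L2_def)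
  define R1 where "R1 = 2*\<sigma>*\<beta>*\<kappa>*a/pi"
  define R2 where "R2 = 2*\<sigma>*\<beta>*\<kappa>/(a*pi)"
  have R1p: "R1 > 0" and R2p: "R2 > 0" using sp bp kp apos by (auto simp: R1_def R2_def)
  define P where "P = nat \<lceil>R1\<rceil>"
  define Q where "Q = nat \<lceil>R2\<rceil>"
  note b1 = ceil_nat_bounds[OF R1p, folded P_def] and b2 = ceil_nat_bounds[OF R2p, folded Q_def]
  have PQ: "P * Q < k"
  proof -
    have "real (P * Q) = real P * real Q" by simp
    also have "\<dots> < (R1 + 1) * (R2 + 1)"
      using b1 b2 R1p R2p by (intro mult_strict_mono) auto
    also have "\<dots> \<le> \<kappa>^4" unfolding R1_def R2_def by (rule arith_main[OF sp kp bp a1 a2 cond])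
    finally have "real (P * Q) < real k" using kk by simp
    then show ?thesis by linarith
  qed
  have mu1: "\<mu> \<le> (pi/(L1/real P))^2"
  proof -
    have "2 * \<beta> * \<kappa> / \<sigma> = pi * R1 / L1"
      using sp apos unfolding R1_def L1_def sA by (simp add: field_simps power2_eq_square)
    also have "\<dots> \<le> pi * real P / L1" using b1 L1p by (intro divide_right_mono mult_left_mono) auto
    also have "\<dots> = pi / (L1 / real P)" using b1 by simp
    finally have "2 * \<beta> * \<kappa> / \<sigma> \<le> pi / (L1 / real P)" .
    then show ?thesis unfolding mu_eq using sp bp kp by (intro power_mono) auto
  qed
  have mu2: "\<mu> \<le> (pi/(L2/real Q))^2"
  proof -
    have "2 * \<beta> * \<kappa> / \<sigma> = pi * R2 / L2"
      using sp apos unfolding R2_def L2_def sA by (simp add: field_simps power2_eq_square)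
    also have "\<dots> \<le> pi * real Q / L2" using b2 L2p by (intro divide_right_mono mult_left_mono) auto
    also have "\<dots> = pi / (L2 / real Q)" using b2 by simp
    finally have "2 * \<beta> * \<kappa> / \<sigma> \<le> pi / (L2 / real Q)" .
    then show ?thesis unfolding mu_eq using sp bp kp by (intro power_mono) auto
  qed
  have "robin_eig_squares A k \<alpha> k = robin_eig k s s \<alpha> k" by (simp add: robin_eig_squares_def s_def)
  also have "\<dots> \<le> \<mu>" unfolding \<mu>_def using k3 s_pos alp by (intro sq_eig_upper) auto
  also have "\<dots> \<le> robin_eig 1 L1 L2 \<alpha> k"
    using L1p L2p alp b1 b2 PQ mu1 mu2 by (intro rect_eig_lower) auto
  also have "\<dots> = robin_eig_rect A a \<alpha> k" by (simp add: robin_eig_rect_def L1_def L2_def)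
  finally show ?thesis .
qed


end
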